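(* For $a,b\in F$ let $\mathrm{Ai}(a;b):=q^{-v(a)/3}\int_{t\in\mathcal{O}}\psi(at^3+bt)\,dt$. Let $a,b\in F$ with $v(a)<0$. Then: (1) if $v(b)<v(a)$, then $\mathrm{Ai}(a;b)=0$; (2) if $v(a)\le v(b)<\frac13v(a)$, then $|\mathrm{Ai}(a;b)|\le 2q^{2+v(3)}q^{-\frac1{12}v(a)+\frac14v(b)}$; (3) if $\frac13v(a)\le v(b)$, then $|\mathrm{Ai}(a;b)|\le q^{1+v(3)}$.
   Context: $F$ is a non-archimedean local field of characteristic $0$ and odd residue characteristic, $\mathcal{O}$ its ring of integers, $v$ the normalised valuation (with $v(0)=\infty$), $q$ the residue field cardinality, $\psi$ a fixed unramified additive character of $F$ (trivial on $\mathcal{O}$ but not on $\varpi^{-1}\mathcal{O}$), and $dt$ the Haar measure with $\mathrm{vol}(\mathcal{O})=1$. *)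

theory Defs
  imports Complex_Main
begin

text \<open>A field F (the type 'a) with a function v : F -> int, meant as the normalised
  discrete valuation on nonzero elements (v 0 is irrelevant; the paper's convention
  v 0 = infinity is handled explicitly in the statement).\<close>

definition intO :: "('a::field \<Rightarrow> int) \<Rightarrow> 'a set" where
  "intO v = {x. x = 0 \<or> 0 \<le> v x}"

definition cong_rel :: "('a::field \<Rightarrow> int) \<Rightarrow> nat \<Rightarrow> ('a \<times> 'a) set" where
  "cong_rel v N = {(x, y). x \<in> intO v \<and> y \<in> intO v \<and> (x = y \<or> int N \<le> v (x - y))}"

definition resq :: "('a::field \<Rightarrow> int) \<Rightarrow> nat" where
  "resq v = card (intO v // cong_rel v 1)"

definition normalised_discrete_valuation :: "('a::field \<Rightarrow> int) \<Rightarrow> bool" where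
  "normalised_discrete_valuation v \<longleftrightarrow>
     (\<forall>x y. x \<noteq> 0 \<longrightarrow> y \<noteq> 0 \<longrightarrow> v (x * y) = v x + v y) \<and>
     (\<forall>x y. x \<noteq> 0 \<longrightarrow> y \<noteq> 0 \<longrightarrow> x + y \<noteq> 0 \<longrightarrow> min (v x) (v y) \<le> v (x + y)) \<and>
     (\<exists>\<pi>. \<pi> \<noteq> 0 \<and> v \<pi> = 1)"

definition v_cauchy :: "('a::field \<Rightarrow> int) \<Rightarrow> (nat \<Rightarrow> 'a) \<Rightarrow> bool" where
  "v_cauchy v X \<longleftrightarrow> (\<forall>M::int. \<exists>N. \<forall>m\<ge>N. \<forall>n\<ge>N. X m = X n \<or> M \<le> v (X m - X n))"

definition v_converges_to :: "('a::field \<Rightarrow> int) \<Rightarrow> (nat \<Rightarrow> 'a) \<Rightarrow> 'a \<Rightarrow> bool" where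
  "v_converges_to v X L \<longleftrightarrow> (\<forall>M::int. \<exists>N. \<forall>n\<ge>N. X n = L \<or> M \<le> v (X n - L))"

text \<open>(F, v) is a non-archimedean local field of characteristic 0 with odd residue
  characteristic: complete w.r.t. a normalised discrete valuation, finite residue field
  of odd cardinality (q odd iff the residue characteristic is odd), characteristic 0.\<close>
definition nonarch_local_field_char0_odd :: "('a::field \<Rightarrow> int) \<Rightarrow> bool" where
  "nonarch_local_field_char0_odd v \<longleftrightarrow>
     normalised_discrete_valuation v \<and>
     (\<forall>n::nat. 0 < n \<longrightarrow> (of_nat n :: 'a) \<noteq> 0) \<and>
     (\<forall>X. v_cauchy v X \<longrightarrow> (\<exists>L. v_converges_to v X L)) \<and>
     finite (intO v // cong_rel v 1) \<and>
     odd (resq v)"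

definition unramified_character :: "('a::field \<Rightarrow> int) \<Rightarrow> ('a \<Rightarrow> complex) \<Rightarrow> bool" where
  "unramified_character v \<psi> \<longleftrightarrow>
     (\<forall>x y. \<psi> (x + y) = \<psi> x * \<psi> y) \<and>
     (\<forall>x. norm (\<psi> x) = 1) \<and>
     (\<forall>x\<in>intO v. \<psi> x = 1) \<and>
     (\<exists>x. x \<noteq> 0 \<and> v x = -1 \<and> \<psi> x \<noteq> 1)"

text \<open>Riemann sum over the cosets of varpi^N O in O, each of Haar volume 1/q^N.\<close>
definition riemann_O :: "('a::field \<Rightarrow> int) \<Rightarrow> ('a \<Rightarrow> complex) \<Rightarrow> nat \<Rightarrow> complex" where
  "riemann_O v f N =
     (\<Sum>C\<in>intO v // cong_rel v N. f (SOME x. x \<in> C)) / of_nat (card (intO v // cong_rel v N))"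

text \<open>Haar integral over O (vol O = 1) of a locally constant function: the limit of the
  Riemann sums, which are eventually constant for locally constant f.\<close>
definition haar_int_O :: "('a::field \<Rightarrow> int) \<Rightarrow> ('a \<Rightarrow> complex) \<Rightarrow> complex" where
  "haar_int_O v f = lim (\<lambda>N. riemann_O v f N)"

definition Airy :: "('a::field \<Rightarrow> int) \<Rightarrow> ('a \<Rightarrow> complex) \<Rightarrow> 'a \<Rightarrow> 'a \<Rightarrow> complex" where
  "Airy v \<psi> a b =
     complex_of_real (real (resq v) powr (- real_of_int (v a) / 3)) *
     haar_int_O v (\<lambda>t. \<psi> (a * t ^ 3 + b * t))"

end

theory Submission
  imports Defs
begin

locale LF =
  fixes v :: "'a::field \<Rightarrow> int" and \<psi> :: "'a \<Rightarrow> complex"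
  assumes LF: "nonarch_local_field_char0_odd v"
    and UC: "unramified_character v \<psi>"
begin

definition pp :: "int \<Rightarrow> 'a \<Rightarrow> bool" where
  "pp N z \<longleftrightarrow> z = 0 \<or> N \<le> v z"

lemma vmult: "x \<noteq> 0 \<Longrightarrow> y \<noteq> 0 \<Longrightarrow> v (x * y) = v x + v y"
  using LF unfolding nonarch_local_field_char0_odd_def normalised_discrete_valuation_def by blast

lemma vadd: "x \<noteq> 0 \<Longrightarrow> y \<noteq> 0 \<Longrightarrow> x + y \<noteq> 0 \<Longrightarrow> min (v x) (v y) \<le> v (x + y)"
  using LF unfolding nonarch_local_field_char0_odd_def normalised_discrete_valuation_def by blast

lemma char0: "0 < n \<Longrightarrow> (of_nat n :: 'a) \<noteq> 0"
  using LF unfolding nonarch_local_field_char0_odd_def by blast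

lemma unif_ex: "\<exists>p. p \<noteq> (0::'a) \<and> v p = 1"
  using LF unfolding nonarch_local_field_char0_odd_def normalised_discrete_valuation_def by blast

definition upi :: 'a where "upi = (SOME p. p \<noteq> 0 \<and> v p = 1)"

lemma upi: "upi \<noteq> 0" "v upi = 1"
  using someI_ex[OF unif_ex] unfolding upi_def by auto

lemma v1: "v 1 = 0"
  using vmult[of 1 1] by simp

lemma vm1: "v (-1) = 0"
  using vmult[of "-1" "-1"] v1 by simp

lemma vneg: "v (- x) = v x"
proof (cases "x = 0")
  case False
  then show ?thesis using vmult[of "-1" x] vm1 by simp
qed simp

lemma vinv: "x \<noteq> 0 \<Longrightarrow> v (inverse x) = - v x"
  using vmult[of x "inverse x"] v1 by simp

lemma vdiv: "x \<noteq> 0 \<Longrightarrow> y \<noteq> 0 \<Longrightarrow> v (x / y) = v x - v y"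
  by (simp add: divide_inverse vmult vinv)

lemma vpow: "x \<noteq> 0 \<Longrightarrow> v (x ^ n) = int n * v x"
  by (induction n) (auto simp: vmult v1 algebra_simps)

lemma pp_0[simp]: "pp N 0" by (simp add: pp_def)

lemma pp_add: "pp N x \<Longrightarrow> pp N y \<Longrightarrow> pp N (x + y)"
  unfolding pp_def using vadd[of x y] by (cases "x = 0"; cases "y = 0"; cases "x + y = 0") auto

lemma pp_neg: "pp N (- x) \<longleftrightarrow> pp N x"
  unfolding pp_def by (simp add: vneg)

lemma pp_diff: "pp N x \<Longrightarrow> pp N y \<Longrightarrow> pp N (x - y)"
  using pp_add[of N x "- y"] pp_neg by simp

lemma pp_sym: "pp N (x - y) \<longleftrightarrow> pp N (y - x)"
  using pp_neg[of N "x - y"] by simp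

lemma pp_mult: "pp N x \<Longrightarrow> pp M y \<Longrightarrow> pp (N + M) (x * y)"
  unfolding pp_def by (cases "x = 0"; cases "y = 0") (auto simp: vmult)

lemma pp_mono: "pp N x \<Longrightarrow> M \<le> N \<Longrightarrow> pp M x"
  unfolding pp_def by auto

lemma pp_self: "pp (v x) x" unfolding pp_def by auto

lemma pp_1: "pp 0 1" by (simp add: pp_def v1)

lemma pp_nat: "pp 0 (of_nat n)"
  by (induction n) (auto simp: pp_add pp_1)

lemma v_nat: "0 < n \<Longrightarrow> 0 \<le> v (of_nat n :: 'a)"
  using pp_nat[of n] char0[of n] unfolding pp_def by auto

lemma pp_pow: "pp N x \<Longrightarrow> pp (int n * N) (x ^ n)"
proof (induction n)
  case 0 then show ?case by (simp add: pp_1)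
next
  case (Suc n)
  then have "pp (N + int n * N) (x * x ^ n)" using pp_mult by blast
  then show ?case by (simp add: algebra_simps)
qed

lemma pp_iff_v: "x \<noteq> 0 \<Longrightarrow> pp N x \<longleftrightarrow> N \<le> v x" unfolding pp_def by simp

lemma v_strict: "x \<noteq> 0 \<Longrightarrow> y \<noteq> 0 \<Longrightarrow> v x < v y \<Longrightarrow> x + y \<noteq> 0 \<and> v (x + y) = v x"
proof -
  assume x: "x \<noteq> 0" and y: "y \<noteq> 0" and lt: "v x < v y"
  have ne: "x + y \<noteq> 0"
  proof
    assume "x + y = 0"
    then have "y = - x" by (simp add: add_eq_0_iff)
    then show False using lt vneg by simp
  qed
  have "min (v x) (v y) \<le> v (x + y)" using vadd[OF x y ne] .
  then have ge: "v x \<le> v (x + y)" using lt by simp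
  have "x = (x + y) + (- y)" by simp
  have "min (v (x + y)) (v (- y)) \<le> v x"
    using vadd[of "x + y" "- y"] ne y x by simp
  then have "v (x + y) \<le> v x" using lt vneg[of y] by (auto simp: min_def split: if_splits)
  then show ?thesis using ge ne by simp
qed

lemma v_strict_pp: "pp M y \<Longrightarrow> x \<noteq> 0 \<Longrightarrow> v x < M \<Longrightarrow> x + y \<noteq> 0 \<and> v (x + y) = v x"
  using v_strict[of x y] unfolding pp_def by (cases "y = 0") auto

end

context LF begin

abbreviation OI where "OI \<equiv> intO v"

lemma intO_pp: "x \<in> OI \<longleftrightarrow> pp 0 x"
  unfolding intO_def pp_def by auto

lemma rel_iff: "(x, y) \<in> cong_rel v N \<longleftrightarrow> x \<in> OI \<and> y \<in> OI \<and> pp (int N) (x - y)"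
  unfolding cong_rel_def pp_def by auto

lemma equiv_rel: "equiv OI (cong_rel v N)"
proof (rule equivI)
  show "cong_rel v N \<subseteq> OI \<times> OI" using rel_iff by auto
  show "refl_on OI (cong_rel v N)"
    unfolding refl_on_def by (auto simp: rel_iff cong_rel_def)
  show "sym (cong_rel v N)"
    unfolding sym_on_def using rel_iff pp_sym by blast
  show "trans (cong_rel v N)"
    unfolding trans_on_def
  proof (intro ballI impI)
    fix x y z assume "(x, y) \<in> cong_rel v N" "(y, z) \<in> cong_rel v N"
    then show "(x, z) \<in> cong_rel v N"
      using pp_add[of "int N" "x - y" "y - z"] rel_iff by auto
  qed
qed

definition cls :: "nat \<Rightarrow> 'a \<Rightarrow> 'a set" where "cls N x = cong_rel v N `` {x}"
definition QQ :: "nat \<Rightarrow> 'a set set" where "QQ N = OI // cong_rel v N"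
definition rep :: "'a set \<Rightarrow> 'a" where "rep C = (SOME x. x \<in> C)"

lemma cls_mem: "x \<in> OI \<Longrightarrow> y \<in> cls N x \<longleftrightarrow> y \<in> OI \<and> pp (int N) (y - x)"
proof -
  assume x: "x \<in> OI"
  have "y \<in> cls N x \<longleftrightarrow> (x, y) \<in> cong_rel v N" unfolding cls_def by simp
  also have "\<dots> \<longleftrightarrow> y \<in> OI \<and> pp (int N) (x - y)" using rel_iff x by simp
  also have "\<dots> \<longleftrightarrow> y \<in> OI \<and> pp (int N) (y - x)" using pp_sym[of "int N" x y] by simp
  finally show ?thesis .
qed

lemma cls_self: "x \<in> OI \<Longrightarrow> x \<in> cls N x"
  using cls_mem by simp

lemma cls_sub: "cls N x \<subseteq> OI"
  unfolding cls_def using rel_iff by blast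

lemma cls_in_Q: "x \<in> OI \<Longrightarrow> cls N x \<in> QQ N"
  unfolding cls_def QQ_def by (rule quotientI)

lemma Q_cases: "C \<in> QQ N \<Longrightarrow> \<exists>x\<in>OI. C = cls N x"
  unfolding cls_def QQ_def by (auto elim: quotientE)

lemma cls_eq: "x \<in> OI \<Longrightarrow> y \<in> OI \<Longrightarrow> cls N x = cls N y \<longleftrightarrow> pp (int N) (x - y)"
proof -
  assume x: "x \<in> OI" and y: "y \<in> OI"
  have "cls N x = cls N y \<longleftrightarrow> (x, y) \<in> cong_rel v N"
    unfolding cls_def using equiv_class_eq_iff[OF equiv_rel, of x y N] x y by simp
  then show ?thesis using rel_iff x y by simp
qed

lemma cls_eqI: "y \<in> cls N x \<Longrightarrow> x \<in> OI \<Longrightarrow> cls N y = cls N x"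
proof -
  assume y: "y \<in> cls N x" and x: "x \<in> OI"
  then have "y \<in> OI" "pp (int N) (y - x)" using cls_mem by auto
  then show ?thesis using cls_eq x by simp
qed

lemma Q_rep: "C \<in> QQ N \<Longrightarrow> rep C \<in> C \<and> cls N (rep C) = C"
proof -
  assume "C \<in> QQ N"
  then obtain x where x: "x \<in> OI" "C = cls N x" using Q_cases by blast
  then have "x \<in> C" using cls_self by simp
  then have r: "rep C \<in> C" unfolding rep_def by (rule someI)
  then show ?thesis using cls_eqI x by auto
qed

lemma Q_sub: "C \<in> QQ N \<Longrightarrow> C \<subseteq> OI"
  using Q_cases cls_sub by blast

lemma rep_O: "C \<in> QQ N \<Longrightarrow> rep C \<in> OI"
  using Q_rep Q_sub by blast

lemma cls_mono: assumes "k \<le> N" "x \<in> OI" shows "cls N x \<subseteq> cls k x"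
proof
  fix y assume "y \<in> cls N x"
  then show "y \<in> cls k x" using cls_mem[of x y N] cls_mem[of x y k] pp_mono[of "int N" "y - x" "int k"] assms by simp
qed

lemma cls_0: "x \<in> OI \<Longrightarrow> cls 0 x = OI"
proof
  assume x: "x \<in> OI"
  show "cls 0 x \<subseteq> OI" by (rule cls_sub)
  show "OI \<subseteq> cls 0 x"
  proof
    fix y assume "y \<in> OI"
    then show "y \<in> cls 0 x" using cls_mem[OF x] intO_pp pp_diff[of 0 y x] x by simp
  qed
qed

lemma rep_cls: "x \<in> OI \<Longrightarrow> pp (int N) (rep (cls N x) - x) \<and> rep (cls N x) \<in> OI"
  using Q_rep[OF cls_in_Q] cls_mem by blast

lemma upi_pow: "upi ^ k \<noteq> 0" "v (upi ^ k) = int k"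
  using upi vpow by auto

lemma pp_mult_upi: "pp M y \<Longrightarrow> pp (M + int k) (upi ^ k * y)"
  using pp_mult[of "int k" "upi ^ k" M y] pp_self[of "upi^k"] upi_pow by (simp add: add.commute)

lemma pp_div_upi: "pp M z \<Longrightarrow> pp (M - int k) (z / upi ^ k)"
  unfolding pp_def using upi_pow by (auto simp: vdiv)

end

context LF begin

lemma fiber_bij:
  assumes x: "x \<in> OI" and kN: "k \<le> N"
  shows "bij_betw (\<lambda>D. cls N (x + upi ^ k * rep D)) (QQ (N - k)) {C \<in> QQ N. C \<subseteq> cls k x}"
proof (rule bij_betw_byWitness[where f' = "\<lambda>C. cls (N - k) ((rep C - x) / upi ^ k)"])
  have NK: "int (N - k) = int N - int k" using kN by simp
  have z_O: "x + upi ^ k * rep D \<in> OI" if "D \<in> QQ (N - k)" for D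
  proof -
    have "pp (0 + int k) (upi ^ k * rep D)" using pp_mult_upi rep_O[OF that] intO_pp by blast
    then have "pp 0 (upi ^ k * rep D)" using pp_mono by fastforce
    then show ?thesis using x intO_pp pp_add by blast
  qed
  have sub: "cls N (x + upi ^ k * rep D) \<subseteq> cls k x" if D: "D \<in> QQ (N - k)" for D
  proof
    fix w assume w: "w \<in> cls N (x + upi ^ k * rep D)"
    then have wO: "w \<in> OI" and p: "pp (int N) (w - (x + upi ^ k * rep D))"
      using cls_mem z_O[OF D] by auto
    have p1: "pp (int k) (w - (x + upi ^ k * rep D))" using pp_mono[OF p] kN by simp
    have "pp (0 + int k) (upi ^ k * rep D)" using pp_mult_upi rep_O[OF D] intO_pp by blast
    then have p2: "pp (int k) (upi ^ k * rep D)" by simp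
    have "w - x = (w - (x + upi ^ k * rep D)) + upi ^ k * rep D" by simp
    then have "pp (int k) (w - x)" using pp_add[OF p1 p2] by simp
    then show "w \<in> cls k x" using cls_mem x wO by simp
  qed
  show "(\<lambda>D. cls N (x + upi ^ k * rep D)) ` QQ (N - k) \<subseteq> {C \<in> QQ N. C \<subseteq> cls k x}"
    using sub cls_in_Q z_O by auto
  have y_O: "(rep C - x) / upi ^ k \<in> OI" if C: "C \<in> {C \<in> QQ N. C \<subseteq> cls k x}" for C
  proof -
    have "rep C \<in> cls k x" using Q_rep C by blast
    then have "pp (int k) (rep C - x)" using cls_mem x by blast
    then have "pp (int k - int k) ((rep C - x) / upi ^ k)" by (rule pp_div_upi)
    then show ?thesis using intO_pp by simp
  qed
  show "(\<lambda>C. cls (N - k) ((rep C - x) / upi ^ k)) ` {C \<in> QQ N. C \<subseteq> cls k x} \<subseteq> QQ (N - k)"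
    using y_O cls_in_Q by auto
  show "\<forall>D\<in>QQ (N - k). cls (N - k) ((rep (cls N (x + upi ^ k * rep D)) - x) / upi ^ k) = D"
  proof
    fix D assume D: "D \<in> QQ (N - k)"
    define z where "z = x + upi ^ k * rep D"
    have zO: "z \<in> OI" using z_O D z_def by simp
    obtain z' where z': "z' = rep (cls N z)" by simp
    have pz: "pp (int N) (z' - z)" and z'O: "z' \<in> OI" using rep_cls[OF zO] z' by auto
    have "(z' - x) / upi ^ k - rep D = (z' - z) / upi ^ k"
      using upi_pow(1)[of k] by (simp add: z_def field_simps)
    moreover have "pp (int N - int k) ((z' - z) / upi ^ k)" using pp_div_upi[OF pz] .
    ultimately have pd: "pp (int (N - k)) ((z' - x) / upi ^ k - rep D)" using NK by simp
    have "z' \<in> cls k x" using sub[OF D] z' Q_rep[OF cls_in_Q[OF zO]] z_def by blast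
    then have "pp (int k) (z' - x)" using cls_mem x by blast
    then have "pp (int k - int k) ((z' - x) / upi ^ k)" by (rule pp_div_upi)
    then have yO: "(z' - x) / upi ^ k \<in> OI" using intO_pp by simp
    have "cls (N - k) ((z' - x) / upi ^ k) = cls (N - k) (rep D)"
      using cls_eq[OF yO rep_O[OF D]] pd by blast
    then show "cls (N - k) ((rep (cls N z) - x) / upi ^ k) = D" using Q_rep[OF D] z' by simp
  qed
  show "\<forall>C\<in>{C \<in> QQ N. C \<subseteq> cls k x}. cls N (x + upi ^ k * rep (cls (N - k) ((rep C - x) / upi ^ k))) = C"
  proof
    fix C assume C: "C \<in> {C \<in> QQ N. C \<subseteq> cls k x}"
    define y where "y = (rep C - x) / upi ^ k"
    have yO: "y \<in> OI" using y_O[OF C] y_def by simp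
    define y' where "y' = rep (cls (N - k) y)"
    have py: "pp (int (N - k)) (y' - y)" and y'O: "y' \<in> OI" using rep_cls[OF yO] y'_def by auto
    have "pp (int (N - k) + int k) (upi ^ k * (y' - y))" using pp_mult_upi[OF py] .
    moreover have "upi ^ k * (y' - y) = (x + upi ^ k * y') - rep C"
      using upi_pow(1)[of k] by (simp add: y_def field_simps)
    ultimately have "pp (int N) ((x + upi ^ k * y') - rep C)" using kN by simp
    moreover have zO: "x + upi ^ k * y' \<in> OI"
    proof -
      have "pp (0 + int k) (upi ^ k * y')" using pp_mult_upi y'O intO_pp by blast
      then have "pp 0 (upi ^ k * y')" using pp_mono by fastforce
      then show ?thesis using x intO_pp pp_add by blast
    qed
    ultimately have "cls N (x + upi ^ k * y') = cls N (rep C)"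
      using cls_eq rep_O C by blast
    then show "cls N (x + upi ^ k * rep (cls (N - k) ((rep C - x) / upi ^ k))) = C"
      using Q_rep C y_def y'_def by auto
  qed
qed

end

context LF begin

lemma Q_split_eq: "D \<in> QQ k \<Longrightarrow> k \<le> N \<Longrightarrow> {C \<in> QQ N. cls k (rep C) = D} = {C \<in> QQ N. C \<subseteq> D}"
proof -
  assume D: "D \<in> QQ k" and kN: "k \<le> N"
  show ?thesis
  proof (intro Collect_cong conj_cong refl iffI)
    fix C assume C: "C \<in> QQ N" and e: "cls k (rep C) = D"
    then show "C \<subseteq> D" using cls_mono[OF kN rep_O[OF C]] Q_rep[OF C] by auto
  next
    fix C assume C: "C \<in> QQ N" and s: "C \<subseteq> D"
    then have "rep C \<in> D" using Q_rep by blast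
    then show "cls k (rep C) = D" using cls_eqI Q_rep[OF D] rep_O[OF D] by metis
  qed
qed

lemma Q_split_sum:
  assumes "finite (QQ N)" "finite (QQ k)" "k \<le> N"
  shows "(\<Sum>C\<in>QQ N. g C) = (\<Sum>D\<in>QQ k. \<Sum>C\<in>{C \<in> QQ N. C \<subseteq> D}. g C)"
proof -
  have "(\<Sum>C\<in>QQ N. g C) = (\<Sum>D\<in>QQ k. \<Sum>C\<in>{C \<in> QQ N. cls k (rep C) = D}. g C)"
  proof (rule sum.group[symmetric])
    show "finite (QQ N)" "finite (QQ k)" by (rule assms)+
    show "(\<lambda>C. cls k (rep C)) ` QQ N \<subseteq> QQ k"
      using cls_in_Q rep_O by blast
  qed
  also have "\<dots> = (\<Sum>D\<in>QQ k. \<Sum>C\<in>{C \<in> QQ N. C \<subseteq> D}. g C)"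
    using Q_split_eq[OF _ assms(3)] by (intro sum.cong refl) simp
  finally show ?thesis .
qed

lemma Q0: "QQ 0 = {OI}"
proof
  have z: "(0::'a) \<in> OI" using intO_pp by simp
  show "{OI} \<subseteq> QQ 0" using cls_in_Q[OF z, of 0] cls_0[OF z] by simp
  show "QQ 0 \<subseteq> {OI}"
  proof
    fix C assume "C \<in> QQ 0"
    then obtain x where "x \<in> OI" "C = cls 0 x" using Q_cases by blast
    then show "C \<in> {OI}" using cls_0 by simp
  qed
qed

abbreviation qq where "qq \<equiv> resq v"

lemma Q1_fin: "finite (QQ 1)" and q_def: "qq = card (QQ 1)"
proof -
  have "finite (intO v // cong_rel v 1)" using LF unfolding nonarch_local_field_char0_odd_def by blast
  then show "finite (QQ 1)" unfolding QQ_def .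
  show "qq = card (QQ 1)" unfolding QQ_def resq_def ..
qed

end

context LF begin

lemma fiber_card:
  assumes "x \<in> OI" "k \<le> N"
  shows "card {C \<in> QQ N. C \<subseteq> cls k x} = card (QQ (N - k))"
  using bij_betw_same_card[OF fiber_bij[OF assms]] by simp

lemma fiber_fin:
  assumes "x \<in> OI" "k \<le> N" "finite (QQ (N - k))"
  shows "finite {C \<in> QQ N. C \<subseteq> cls k x}"
  using bij_betw_finite[OF fiber_bij[OF assms(1,2)]] assms(3) by simp

end

context LF begin

lemma Q_fin_card: "finite (QQ N) \<and> card (QQ N) = qq ^ N"
proof (induction N)
  case 0 then show ?case using Q0 by simp
next
  case (Suc N)
  have fib: "\<And>D. D \<in> QQ N \<Longrightarrow> finite {C \<in> QQ (Suc N). C \<subseteq> D} \<and> card {C \<in> QQ (Suc N). C \<subseteq> D} = qq"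
  proof -
    fix D assume D: "D \<in> QQ N"
    then obtain x where x: "x \<in> OI" "D = cls N x" using Q_cases by blast
    show "finite {C \<in> QQ (Suc N). C \<subseteq> D} \<and> card {C \<in> QQ (Suc N). C \<subseteq> D} = qq"
    proof -
      have "finite {C \<in> QQ (Suc N). C \<subseteq> cls N x}" using fiber_fin[OF x(1), of N "Suc N"] Q1_fin by simp
      moreover have "card {C \<in> QQ (Suc N). C \<subseteq> cls N x} = card (QQ 1)" using fiber_card[OF x(1), of N "Suc N"] by simp
      ultimately show ?thesis using q_def x(2) by simp
    qed
  qed
  have sub: "QQ (Suc N) \<subseteq> (\<Union>D\<in>QQ N. {C \<in> QQ (Suc N). C \<subseteq> D})"
  proof
    fix C assume C: "C \<in> QQ (Suc N)"
    then have "C \<subseteq> cls N (rep C)" using cls_mono[of N "Suc N" "rep C"] rep_O[OF C] Q_rep[OF C] by simp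
    then show "C \<in> (\<Union>D\<in>QQ N. {C \<in> QQ (Suc N). C \<subseteq> D})" using C cls_in_Q[OF rep_O[OF C], of N] by (intro UN_I[of "cls N (rep C)"]) simp_all
  qed
  have fin: "finite (QQ (Suc N))"
    by (rule finite_subset[OF sub]) (use Suc.IH fib in simp)
  have "card (QQ (Suc N)) = (\<Sum>D\<in>QQ N. card {C \<in> QQ (Suc N). C \<subseteq> D})"
    using Q_split_sum[of "Suc N" N "\<lambda>C. 1::nat"] fin Suc.IH by simp
  also have "\<dots> = (\<Sum>D\<in>QQ N. qq)" using fib by (intro sum.cong) auto
  also have "\<dots> = qq ^ Suc N" using Suc.IH by simp
  finally show ?case using fin by simp
qed

lemma Q_fin: "finite (QQ N)" and Q_card: "card (QQ N) = qq ^ N"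
  using Q_fin_card by blast+

lemma fiber_card': "x \<in> OI \<Longrightarrow> k \<le> N \<Longrightarrow> card {C \<in> QQ N. C \<subseteq> cls k x} = qq ^ (N - k)"
  using fiber_card Q_card by simp

lemma fiber_card_D: "D \<in> QQ k \<Longrightarrow> k \<le> N \<Longrightarrow> card {C \<in> QQ N. C \<subseteq> D} = qq ^ (N - k)"
proof -
  assume D: "D \<in> QQ k" and kN: "k \<le> N"
  obtain x where x: "x \<in> OI" "D = cls k x" using Q_cases[OF D] by blast
  show ?thesis using fiber_card'[OF x(1) kN] x(2) by simp
qed

end

context LF begin

lemma z_O: "(0::'a) \<in> OI" using intO_pp by simp

lemma qq_pos: "0 < qq"
proof -
  have "cls 1 0 \<in> QQ 1" using cls_in_Q[OF z_O] .
  then have "QQ 1 \<noteq> {}" by blast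
  then show ?thesis using q_def Q1_fin by (simp add: card_gt_0_iff)
qed

definition AV :: "nat \<Rightarrow> ('a \<Rightarrow> complex) \<Rightarrow> complex" where
  "AV N g = (\<Sum>C\<in>QQ N. g (rep C)) / of_nat (qq ^ N)"

definition lc :: "nat \<Rightarrow> ('a \<Rightarrow> 'b) \<Rightarrow> bool" where
  "lc N g \<longleftrightarrow> (\<forall>x\<in>OI. \<forall>y\<in>OI. pp (int N) (x - y) \<longrightarrow> g x = g y)"

lemma lcD: "lc N g \<Longrightarrow> x \<in> OI \<Longrightarrow> y \<in> OI \<Longrightarrow> pp (int N) (x - y) \<Longrightarrow> g x = g y"
  unfolding lc_def by blast

lemma lc_mono: "lc N g \<Longrightarrow> N \<le> M \<Longrightarrow> lc M g"
  unfolding lc_def using pp_mono by (meson of_nat_le_iff)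

lemma lc_rep_eq:
  assumes g: "lc N g" and D: "D \<in> QQ N" and x: "x \<in> D"
  shows "g x = g (rep D)"
proof -
  have xO: "x \<in> OI" using Q_sub[OF D] x by blast
  have "cls N x = D" using cls_eqI[OF _ rep_O[OF D]] Q_rep[OF D] x by metis
  then have "cls N x = cls N (rep D)" using Q_rep[OF D] by simp
  then have "pp (int N) (x - rep D)" using cls_eq[OF xO rep_O[OF D]] by simp
  then show ?thesis using lcD[OF g xO rep_O[OF D]] by simp
qed

lemma AV_level:
  assumes g: "lc N g" and NM: "N \<le> M"
  shows "AV M g = AV N g"
proof -
  have "(\<Sum>C\<in>QQ M. g (rep C)) = (\<Sum>D\<in>QQ N. \<Sum>C\<in>{C \<in> QQ M. C \<subseteq> D}. g (rep C))"
    using Q_split_sum[OF Q_fin Q_fin NM, of "\<lambda>C. g (rep C)"] by simp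
  also have "\<dots> = (\<Sum>D\<in>QQ N. \<Sum>C\<in>{C \<in> QQ M. C \<subseteq> D}. g (rep D))"
  proof (intro sum.cong refl)
    fix D C assume D: "D \<in> QQ N" and C: "C \<in> {C \<in> QQ M. C \<subseteq> D}"
    then have "rep C \<in> D" using Q_rep by blast
    then show "g (rep C) = g (rep D)" using lc_rep_eq[OF g D] by simp
  qed
  also have "\<dots> = (\<Sum>D\<in>QQ N. of_nat (qq ^ (M - N)) * g (rep D))"
    using fiber_card_D[OF _ NM] by (intro sum.cong refl) simp
  also have "\<dots> = of_nat (qq ^ (M - N)) * (\<Sum>D\<in>QQ N. g (rep D))"
    by (simp add: sum_distrib_left)
  finally have e: "(\<Sum>C\<in>QQ M. g (rep C)) = of_nat (qq ^ (M - N)) * (\<Sum>D\<in>QQ N. g (rep D))" .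
  have "(of_nat (qq ^ M) :: complex) = of_nat (qq ^ (M - N)) * of_nat (qq ^ N)"
    using NM by (simp add: power_add[symmetric])
  moreover have "(of_nat (qq ^ N) :: complex) \<noteq> 0" "(of_nat (qq ^ (M - N)) :: complex) \<noteq> 0" using qq_pos by auto
  ultimately show ?thesis unfolding AV_def e by (simp add: field_simps)
qed

lemma riemann_AV: "riemann_O v g N = AV N g"
  unfolding riemann_O_def AV_def using Q_card unfolding QQ_def rep_def by simp

lemma haar_eq: assumes "lc N g" shows "haar_int_O v g = AV N g"
proof -
  have "eventually (\<lambda>M. riemann_O v g M = AV N g) sequentially"
    using AV_level[OF assms] riemann_AV unfolding eventually_sequentially by metis
  then have "(\<lambda>M. riemann_O v g M) \<longlonglongrightarrow> AV N g" by (rule tendsto_eventually)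
  then show ?thesis unfolding haar_int_O_def by (rule limI)
qed

lemma AV_cong: "(\<And>x. x \<in> OI \<Longrightarrow> g x = h x) \<Longrightarrow> AV N g = AV N h"
  unfolding AV_def using rep_O by (metis (no_types, lifting) sum.cong)

lemma AV_add: "AV N (\<lambda>x. g x + h x) = AV N g + AV N h"
  unfolding AV_def by (simp add: sum.distrib add_divide_distrib)

lemma AV_cmult: "AV N (\<lambda>x. c * g x) = c * AV N g"
  unfolding AV_def by (simp add: sum_distrib_left)

lemma AV_sum: "finite S \<Longrightarrow> AV N (\<lambda>x. \<Sum>i\<in>S. g i x) = (\<Sum>i\<in>S. AV N (g i))"
  unfolding AV_def by (simp add: sum.swap[of _ S] sum_divide_distrib)

lemma AV_trans:
  assumes g: "lc N g" and s: "s \<in> OI"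
  shows "AV N (\<lambda>x. g (x + s)) = AV N g"
proof -
  have sO: "pp 0 s" using s intO_pp by simp
  have xs: "x + s \<in> OI" if "x \<in> OI" for x using pp_add[of 0 x s] sO that intO_pp by simp
  have xms: "x - s \<in> OI" if "x \<in> OI" for x using pp_diff[of 0 x s] sO that intO_pp by simp
  have "(\<Sum>C\<in>QQ N. g (rep C + s)) = (\<Sum>C\<in>QQ N. g (rep (cls N (rep C + s))))"
  proof (intro sum.cong refl)
    fix C assume C: "C \<in> QQ N"
    have o: "rep C + s \<in> OI" using xs rep_O[OF C] .
    then have "rep (cls N (rep C + s)) \<in> cls N (rep C + s)" using Q_rep[OF cls_in_Q] by blast
    then show "g (rep C + s) = g (rep (cls N (rep C + s)))"
      using lc_rep_eq[OF g cls_in_Q[OF o]] Q_rep[OF cls_in_Q[OF o]] cls_self[OF o] by metis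
  qed
  also have "\<dots> = (\<Sum>C\<in>QQ N. g (rep C))"
  proof (rule sum.reindex_bij_witness[where i = "\<lambda>C. cls N (rep C - s)" and j = "\<lambda>C. cls N (rep C + s)"])
    fix C assume C: "C \<in> QQ N"
    have o: "rep C + s \<in> OI" using xs rep_O[OF C] .
    show "cls N (rep C + s) \<in> QQ N" using cls_in_Q[OF o] .
    have r: "pp (int N) (rep (cls N (rep C + s)) - (rep C + s))" and rO: "rep (cls N (rep C + s)) \<in> OI"
      using rep_cls[OF o] by auto
    have "pp (int N) ((rep (cls N (rep C + s)) - s) - rep C)" using r by (simp add: algebra_simps)
    then have "cls N (rep (cls N (rep C + s)) - s) = cls N (rep C)"
      using cls_eq[OF xms[OF rO] rep_O[OF C]] by simp
    then show "cls N (rep (cls N (rep C + s)) - s) = C" using Q_rep[OF C] by simp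
    show "g (rep (cls N (rep C + s))) = g (rep (cls N (rep C + s)))" ..
  next
    fix C assume C: "C \<in> QQ N"
    have o: "rep C - s \<in> OI" using xms rep_O[OF C] .
    show "cls N (rep C - s) \<in> QQ N" using cls_in_Q[OF o] .
    have r: "pp (int N) (rep (cls N (rep C - s)) - (rep C - s))" and rO: "rep (cls N (rep C - s)) \<in> OI"
      using rep_cls[OF o] by auto
    have "pp (int N) ((rep (cls N (rep C - s)) + s) - rep C)" using r by (simp add: algebra_simps)
    then have "cls N (rep (cls N (rep C - s)) + s) = cls N (rep C)"
      using cls_eq[OF xs[OF rO] rep_O[OF C]] by simp
    then show "cls N (rep (cls N (rep C - s)) + s) = C" using Q_rep[OF C] by simp
  qed
  finally show ?thesis unfolding AV_def by simp
qed

lemma AV_norm: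
  assumes "\<And>x. x \<in> OI \<Longrightarrow> norm (g x) \<le> 1"
  shows "norm (AV N g) \<le> 1"
proof -
  have "norm (\<Sum>C\<in>QQ N. g (rep C)) \<le> (\<Sum>C\<in>QQ N. norm (g (rep C)))" by (rule norm_sum)
  also have "\<dots> \<le> (\<Sum>C\<in>QQ N. 1)" using assms rep_O by (intro sum_mono) blast
  also have "\<dots> = real (qq ^ N)" using Q_card by simp
  finally show ?thesis unfolding AV_def using qq_pos by (simp add: norm_divide norm_power)
qed

end

context LF begin

definition ind :: "'a set \<Rightarrow> 'a \<Rightarrow> complex" where "ind A x = (if x \<in> A then 1 else 0)"

definition UU :: "'a set" where "UU = {x \<in> OI. \<not> pp 1 x}"

lemma ind_norm: "norm (ind A x) \<le> 1" unfolding ind_def by simp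

lemma lc_mult: "lc N g \<Longrightarrow> lc N h \<Longrightarrow> lc N (\<lambda>x. g x * h x)"
proof -
  assume g: "lc N g" and h: "lc N h"
  show ?thesis unfolding lc_def
  proof (intro ballI impI)
    fix x y assume "x \<in> OI" "y \<in> OI" "pp (int N) (x - y)"
    then show "g x * h x = g y * h y" using lcD[OF g] lcD[OF h] by metis
  qed
qed


lemma cls_iff_pp: "t0 \<in> OI \<Longrightarrow> x \<in> OI \<Longrightarrow> x \<in> cls k t0 \<longleftrightarrow> pp (int k) (x - t0)"
  using cls_mem by simp

lemma lc_ind_cls:
  assumes t0: "t0 \<in> OI" and kN: "k \<le> N"
  shows "lc N (ind (cls k t0))"
  unfolding lc_def
proof (intro ballI impI)
  fix x y assume x: "x \<in> OI" and y: "y \<in> OI" and p: "pp (int N) (x - y)"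
  have pk: "pp (int k) (x - y)" using pp_mono[OF p] kN by simp
  have "pp (int k) (x - t0) \<longleftrightarrow> pp (int k) (y - t0)"
  proof
    assume "pp (int k) (x - t0)"
    then have "pp (int k) ((x - t0) - (x - y))" using pp_diff pk by blast
    then show "pp (int k) (y - t0)" by simp
  next
    assume "pp (int k) (y - t0)"
    then have "pp (int k) ((y - t0) + (x - y))" using pp_add pk by blast
    then show "pp (int k) (x - t0)" by simp
  qed
  then show "ind (cls k t0) x = ind (cls k t0) y"
    unfolding ind_def using cls_iff_pp[OF t0 x] cls_iff_pp[OF t0 y] by simp
qed

lemma lc_ind_Q: "C \<in> QQ k \<Longrightarrow> k \<le> N \<Longrightarrow> lc N (ind C)"
proof -
  assume C: "C \<in> QQ k" and kN: "k \<le> N"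
  obtain x where "x \<in> OI" "C = cls k x" using Q_cases[OF C] by blast
  then show ?thesis using lc_ind_cls[OF _ kN] by simp
qed

lemma Un_cls: "UU = OI - cls 1 0"
proof -
  have "x \<in> cls 1 0 \<longleftrightarrow> x \<in> OI \<and> pp 1 x" for x using cls_mem[OF z_O, of x 1] by simp
  then show ?thesis unfolding UU_def by blast
qed

lemma upi_O: "x \<in> OI \<Longrightarrow> upi * x \<in> OI \<and> pp 1 (upi * x)"
proof -
  assume "x \<in> OI"
  then have "pp (0 + int 1) (upi ^ 1 * x)" using pp_mult_upi intO_pp by blast
  then have p: "pp 1 (upi * x)" by simp
  then have "pp 0 (upi * x)" using pp_mono[OF p] by simp
  then show ?thesis using p intO_pp by simp
qed

lemma lc_ind_Un: "1 \<le> N \<Longrightarrow> lc N (ind UU)"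
proof -
  assume N: "1 \<le> N"
  have L: "lc N (ind (cls 1 0))" using lc_ind_cls[OF z_O N] .
  show "lc N (ind UU)" unfolding lc_def
  proof (intro ballI impI)
    fix x y assume x: "x \<in> OI" and y: "y \<in> OI" and p: "pp (int N) (x - y)"
    have e: "ind (cls 1 0) x = ind (cls 1 0) y" using lcD[OF L x y p] .
    have "ind UU z = 1 - ind (cls 1 0) z" if "z \<in> OI" for z
      using that unfolding Un_cls ind_def by simp
    then show "ind UU x = ind UU y" using e x y by simp
  qed
qed

lemma rep_in_iff:
  assumes C: "C \<in> QQ k" and C': "C' \<in> QQ N" and kN: "k \<le> N"
  shows "rep C' \<in> C \<longleftrightarrow> C' \<subseteq> C"
proof -
  have "rep C' \<in> C \<longleftrightarrow> cls k (rep C') = C"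
  proof
    assume "rep C' \<in> C"
    then show "cls k (rep C') = C" using cls_eqI[OF _ rep_O[OF C]] Q_rep[OF C] by metis
  next
    assume "cls k (rep C') = C"
    then show "rep C' \<in> C" using cls_self[OF rep_O[OF C']] by blast
  qed
  also have "\<dots> \<longleftrightarrow> C' \<in> {D \<in> QQ N. cls k (rep D) = C}" using C' by simp
  also have "\<dots> \<longleftrightarrow> C' \<in> {D \<in> QQ N. D \<subseteq> C}" using Q_split_eq[OF C kN] by simp
  also have "\<dots> \<longleftrightarrow> C' \<subseteq> C" using C' by simp
  finally show ?thesis .
qed

lemma AV_class_norm:
  assumes C: "C \<in> QQ k" and kN: "k \<le> N" and g: "\<And>x. x \<in> OI \<Longrightarrow> norm (g x) \<le> 1"
  shows "norm (AV N (\<lambda>x. ind C x * g x)) \<le> 1 / real qq ^ k"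
proof -
  have "norm (\<Sum>C'\<in>QQ N. ind C (rep C') * g (rep C')) \<le> (\<Sum>C'\<in>QQ N. norm (ind C (rep C') * g (rep C')))"
    by (rule norm_sum)
  also have "\<dots> \<le> (\<Sum>C'\<in>QQ N. (if C' \<subseteq> C then 1 else 0))"
  proof (intro sum_mono)
    fix C' assume C': "C' \<in> QQ N"
    show "norm (ind C (rep C') * g (rep C')) \<le> (if C' \<subseteq> C then 1 else 0)"
      using rep_in_iff[OF C C' kN] g[OF rep_O[OF C']] unfolding ind_def by (simp add: norm_mult)
  qed
  also have "\<dots> = real (card {C' \<in> QQ N. C' \<subseteq> C})"
    using sum.inter_filter[OF Q_fin[of N], where g = "\<lambda>_. 1::real" and P = "\<lambda>C'. C' \<subseteq> C"] by simp
  also have "\<dots> = real qq ^ (N - k)" using fiber_card_D[OF C kN] by simp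
  finally have b: "norm (\<Sum>C'\<in>QQ N. ind C (rep C') * g (rep C')) \<le> real qq ^ (N - k)" .
  have "real qq ^ (N - k) / real qq ^ N = 1 / real qq ^ k"
    using qq_pos kN by (simp add: power_diff)
  have "norm (AV N (\<lambda>x. ind C x * g x)) = norm (\<Sum>C'\<in>QQ N. ind C (rep C') * g (rep C')) / real qq ^ N"
    unfolding AV_def by (simp add: norm_divide norm_power)
  also have "\<dots> \<le> real qq ^ (N - k) / real qq ^ N"
    using b qq_pos by (intro divide_right_mono) simp_all
  finally show ?thesis using \<open>real qq ^ (N - k) / real qq ^ N = 1 / real qq ^ k\<close> by simp
qed

lemma lc_scale: "lc (Suc N) G \<Longrightarrow> lc N (\<lambda>u. G (upi * u))"
  unfolding lc_def
proof (intro ballI impI)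
  fix x y assume G: "\<forall>x\<in>OI. \<forall>y\<in>OI. pp (int (Suc N)) (x - y) \<longrightarrow> G x = G y"
    and x: "x \<in> OI" and y: "y \<in> OI" and p: "pp (int N) (x - y)"
  have ux: "upi * x \<in> OI" and uy: "upi * y \<in> OI"
    using upi_O x y by blast+
  have "pp (int N + int 1) (upi ^ 1 * (x - y))" by (rule pp_mult_upi[OF p])
  then have "pp (int (Suc N)) (upi * x - upi * y)" by (simp add: algebra_simps)
  then show "G (upi * x) = G (upi * y)" using G ux uy by blast
qed

lemma AV_scale:
  assumes G: "lc (Suc N) G"
  shows "AV (Suc N) (\<lambda>t. ind (cls 1 0) t * G t) = AV N (\<lambda>u. G (upi * u)) / of_nat qq"
proof -
  have c10: "cls 1 0 \<in> QQ 1" using cls_in_Q[OF z_O] .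
  have "(\<Sum>C\<in>QQ (Suc N). ind (cls 1 0) (rep C) * G (rep C)) = (\<Sum>C\<in>QQ (Suc N). if C \<subseteq> cls 1 0 then G (rep C) else 0)"
    using rep_in_iff[OF c10] unfolding ind_def by (intro sum.cong refl) simp
  also have "\<dots> = (\<Sum>C\<in>{C \<in> QQ (Suc N). C \<subseteq> cls 1 0}. G (rep C))"
    by (rule sum.inter_filter[symmetric, OF Q_fin])
  also have "\<dots> = (\<Sum>D\<in>QQ N. G (rep (cls (Suc N) (0 + upi ^ 1 * rep D))))"
    using sum.reindex_bij_betw[OF fiber_bij[OF z_O, of 1 "Suc N"], of "\<lambda>C. G (rep C)"] by simp
  also have "\<dots> = (\<Sum>D\<in>QQ N. G (upi * rep D))"
  proof (intro sum.cong refl)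
    fix D assume D: "D \<in> QQ N"
    have uO: "upi * rep D \<in> OI"
      using upi_O rep_O[OF D] by blast
    have "pp (int (Suc N)) (rep (cls (Suc N) (upi * rep D)) - upi * rep D)"
      and "rep (cls (Suc N) (upi * rep D)) \<in> OI" using rep_cls[OF uO, of "Suc N"] by blast+
    then show "G (rep (cls (Suc N) (0 + upi ^ 1 * rep D))) = G (upi * rep D)"
      using lcD[OF G _ uO] by simp
  qed
  finally have e: "(\<Sum>C\<in>QQ (Suc N). ind (cls 1 0) (rep C) * G (rep C)) = (\<Sum>D\<in>QQ N. G (upi * rep D))" .
  have "(of_nat (qq ^ Suc N) :: complex) = of_nat (qq ^ N) * of_nat qq" by simp
  then show ?thesis unfolding AV_def e by (simp only: divide_divide_eq_left)
qed

end

context LF begin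

lemma psi_add: "\<psi> (x + y) = \<psi> x * \<psi> y"
  using UC unfolding unramified_character_def by blast

lemma psi_norm: "norm (\<psi> x) = 1"
  using UC unfolding unramified_character_def by blast

lemma psi_O: "pp 0 x \<Longrightarrow> \<psi> x = 1"
  using UC intO_pp unfolding unramified_character_def by blast

lemma psi_nontriv: "\<exists>x. x \<noteq> 0 \<and> v x = -1 \<and> \<psi> x \<noteq> 1"
  using UC unfolding unramified_character_def by blast

lemma psi_pp0: "pp 0 (x - y) \<Longrightarrow> \<psi> x = \<psi> y"
proof -
  assume "pp 0 (x - y)"
  then have "\<psi> (y + (x - y)) = \<psi> y * 1" using psi_add psi_O by metis
  then show ?thesis by simp
qed

definition F :: "'a \<Rightarrow> 'a \<Rightarrow> 'a \<Rightarrow> complex" where "F a b t = \<psi> (a * t ^ 3 + b * t)"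

lemma F_norm: "norm (F a b t) \<le> 1" unfolding F_def using psi_norm by simp

lemma lc_F:
  assumes a: "pp (- int N) a" and b: "pp (- int N) b"
  shows "lc N (F a b)"
  unfolding lc_def
proof (intro ballI impI)
  fix x y assume x: "x \<in> OI" and y: "y \<in> OI" and p: "pp (int N) (x - y)"
  have x0: "pp 0 x" and y0: "pp 0 y" using x y intO_pp by auto
  have x2: "pp 0 (x ^ 2)" using pp_pow[OF x0, of 2] by simp
  have y2: "pp 0 (y ^ 2)" using pp_pow[OF y0, of 2] by simp
  have xy: "pp 0 (x * y)" using pp_mult[OF x0 y0] by simp
  have q: "pp 0 (x ^ 2 + x * y + y ^ 2)" using pp_add[OF pp_add[OF x2 xy] y2] .
  have "pp (- int N + 0) (a * (x ^ 2 + x * y + y ^ 2))" by (rule pp_mult[OF a q])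
  then have r: "pp (- int N) (a * (x ^ 2 + x * y + y ^ 2) + b)" using pp_add b by simp
  have "pp (int N + - int N) ((x - y) * (a * (x ^ 2 + x * y + y ^ 2) + b))" by (rule pp_mult[OF p r])
  moreover have "(x - y) * (a * (x ^ 2 + x * y + y ^ 2) + b) = (a * x ^ 3 + b * x) - (a * y ^ 3 + b * y)"
    by (simp add: algebra_simps power2_eq_square power3_eq_cube)
  ultimately have "pp 0 ((a * x ^ 3 + b * x) - (a * y ^ 3 + b * y))" by simp
  then show "F a b x = F a b y" unfolding F_def by (rule psi_pp0)
qed

lemma pp_neg_nat: "pp (- int (nat (- v a))) a"
  unfolding pp_def by auto

lemma lc_F_ex: "\<exists>N\<ge>K. lc N (F a b)"
proof -
  define N where "N = K + nat (- v a) + nat (- v b)"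
  have A: "pp (- int N) a" by (rule pp_mono[OF pp_neg_nat[of a]]) (simp add: N_def)
  have B: "pp (- int N) b" by (rule pp_mono[OF pp_neg_nat[of b]]) (simp add: N_def)
  have "lc N (F a b)" using lc_F[OF A B] .
  moreover have "N \<ge> K" using N_def by simp
  ultimately show ?thesis by blast
qed

definition II where "II a b = haar_int_O v (F a b)"
definition UI where "UI a b = haar_int_O v (\<lambda>t. ind UU t * F a b t)"
definition CI where "CI C a b = haar_int_O v (\<lambda>t. ind C t * F a b t)"

lemma II_norm: "norm (II a b) \<le> 1"
proof -
  obtain N where "lc N (F a b)" using lc_F_ex by blast
  then show ?thesis unfolding II_def using haar_eq AV_norm F_norm by metis
qed

lemma CI_norm:
  assumes C: "C \<in> QQ k" shows "norm (CI C a b) \<le> 1 / real qq ^ k"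
proof -
  obtain N where N: "N \<ge> k" "lc N (F a b)" using lc_F_ex by blast
  have "lc N (\<lambda>t. ind C t * F a b t)" using lc_mult[OF lc_ind_Q[OF C N(1)] N(2)] .
  then have "CI C a b = AV N (\<lambda>t. ind C t * F a b t)" unfolding CI_def by (rule haar_eq)
  then show ?thesis using AV_class_norm[OF C N(1)] F_norm by simp
qed

lemma UI_split:
  assumes k: "1 \<le> k"
  shows "UI a b = (\<Sum>C\<in>{C \<in> QQ k. C \<subseteq> UU}. CI C a b)"
proof -
  obtain N where N: "N \<ge> k" "lc N (F a b)" using lc_F_ex by blast
  let ?S = "{C \<in> QQ k. C \<subseteq> UU}"
  have finS: "finite ?S" using Q_fin by simp
  have pt: "ind UU x = (\<Sum>C\<in>?S. ind C x)" if x: "x \<in> OI" for x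
  proof -
    have "(\<Sum>C\<in>?S. ind C x) = (\<Sum>C\<in>?S. if cls k x = C then 1 else 0)"
    proof (intro sum.cong refl)
      fix C assume "C \<in> ?S"
      then have C: "C \<in> QQ k" by simp
      have "x \<in> C \<longleftrightarrow> C = cls k x"
      proof
        assume "x \<in> C"
        then show "C = cls k x" using cls_eqI[OF _ rep_O[OF C]] Q_rep[OF C] by metis
      next
        assume "C = cls k x" then show "x \<in> C" using cls_self[OF x] by simp
      qed
      then show "ind C x = (if cls k x = C then 1 else 0)" unfolding ind_def by auto
    qed
    also have "\<dots> = (if cls k x \<in> ?S then 1 else 0)"
      using sum.delta'[OF finS, of "cls k x" "\<lambda>_. 1::complex"] by simp
    also have "\<dots> = ind UU x"
    proof -
      have "cls k x \<subseteq> UU \<longleftrightarrow> x \<in> UU"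
      proof
        assume "cls k x \<subseteq> UU" then show "x \<in> UU" using cls_self[OF x] by blast
      next
        assume xu: "x \<in> UU"
        show "cls k x \<subseteq> UU"
        proof
          fix y assume "y \<in> cls k x"
          then have yO: "y \<in> OI" and p: "pp (int k) (y - x)" using cls_mem[OF x] by auto
          have p1: "pp 1 (y - x)" using pp_mono[OF p] k by simp
          have "\<not> pp 1 y"
          proof
            assume "pp 1 y"
            then have "pp 1 (y - (y - x))" using pp_diff p1 by blast
            then show False using xu unfolding UU_def by simp
          qed
          then show "y \<in> UU" using yO unfolding UU_def by simp
        qed
      qed
      then show ?thesis using cls_in_Q[OF x, of k] unfolding ind_def by simp
    qed
    finally show ?thesis by simp
  qed
  have l1: "lc N (\<lambda>t. ind UU t * F a b t)" using lc_mult[OF lc_ind_Un N(2)] N(1) k by simp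
  have lC: "lc N (\<lambda>t. ind C t * F a b t)" if "C \<in> ?S" for C
    using lc_mult[OF lc_ind_Q[OF _ N(1)] N(2)] that by simp
  have "UI a b = AV N (\<lambda>t. ind UU t * F a b t)" unfolding UI_def using haar_eq[OF l1] .
  also have "\<dots> = AV N (\<lambda>t. \<Sum>C\<in>?S. ind C t * F a b t)"
    using pt by (intro AV_cong) (simp add: sum_distrib_right)
  also have "\<dots> = (\<Sum>C\<in>?S. AV N (\<lambda>t. ind C t * F a b t))" using AV_sum[OF finS] .
  also have "\<dots> = (\<Sum>C\<in>?S. CI C a b)"
    unfolding CI_def using haar_eq[OF lC] by (intro sum.cong refl) simp
  finally show ?thesis .
qed

end

context LF begin

lemma F_scale: "(\<lambda>u. F a b (upi * u)) = F (a * upi ^ 3) (b * upi)"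
  unfolding F_def by (rule ext) (simp add: algebra_simps power_mult_distrib)

lemma REC: "II a b = UI a b + II (a * upi ^ 3) (b * upi) / of_nat qq"
proof -
  obtain N where N: "N \<ge> 1" "lc (Suc N) (F a b)"
    using lc_F_ex[of "Suc 1" a b] by (metis Suc_le_D Suc_le_mono)
  have l2: "lc N (F (a * upi ^ 3) (b * upi))" using lc_scale[OF N(2)] F_scale by simp
  have lU: "lc (Suc N) (\<lambda>t. ind UU t * F a b t)" using lc_mult[OF lc_ind_Un N(2)] by simp
  have lC: "lc (Suc N) (\<lambda>t. ind (cls 1 0) t * F a b t)"
    using lc_mult[OF lc_ind_cls[OF z_O] N(2)] by simp
  have "II a b = AV (Suc N) (F a b)" unfolding II_def using haar_eq[OF N(2)] .
  also have "\<dots> = AV (Suc N) (\<lambda>t. ind UU t * F a b t + ind (cls 1 0) t * F a b t)"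
  proof (rule AV_cong)
    fix t assume t: "t \<in> OI"
    show "F a b t = ind UU t * F a b t + ind (cls 1 0) t * F a b t"
      unfolding ind_def Un_cls using t by simp
  qed
  also have "\<dots> = AV (Suc N) (\<lambda>t. ind UU t * F a b t) + AV (Suc N) (\<lambda>t. ind (cls 1 0) t * F a b t)"
    by (rule AV_add)
  also have "AV (Suc N) (\<lambda>t. ind UU t * F a b t) = UI a b"
    unfolding UI_def using haar_eq[OF lU] by simp
  also have "AV (Suc N) (\<lambda>t. ind (cls 1 0) t * F a b t) = AV N (\<lambda>u. F a b (upi * u)) / of_nat qq"
    by (rule AV_scale[OF N(2)])
  also have "AV N (\<lambda>u. F a b (upi * u)) = II (a * upi ^ 3) (b * upi)"
    unfolding II_def F_scale using haar_eq[OF l2] by simp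
  finally show ?thesis .
qed

lemma VL:
  assumes t0: "t0 \<in> OI" and s: "pp (int k) s" and w: "\<psi> w \<noteq> 1"
    and R: "\<And>t. t \<in> cls k t0 \<Longrightarrow> pp 0 (a * (t + s) ^ 3 + b * (t + s) - (a * t ^ 3 + b * t) - w)"
  shows "CI (cls k t0) a b = 0"
proof -
  obtain N where N: "N \<ge> k" "lc N (F a b)" using lc_F_ex by blast
  define g where "g = (\<lambda>t. ind (cls k t0) t * F a b t)"
  have lg: "lc N g" unfolding g_def using lc_mult[OF lc_ind_cls[OF t0 N(1)] N(2)] .
  have sO: "s \<in> OI" using pp_mono[OF s] intO_pp by simp
  have pt: "g (t + s) = \<psi> w * g t" if t: "t \<in> OI" for t
  proof -
    have ts: "t + s \<in> OI" using pp_add[of 0 t s] t sO intO_pp by simp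
    have "pp (int k) (t + s - t0) \<longleftrightarrow> pp (int k) (t - t0)"
    proof
      assume "pp (int k) (t + s - t0)"
      then have "pp (int k) ((t + s - t0) - s)" using pp_diff s by blast
      then show "pp (int k) (t - t0)" by simp
    next
      assume "pp (int k) (t - t0)"
      then have "pp (int k) ((t - t0) + s)" using pp_add s by blast
      then show "pp (int k) (t + s - t0)" by (simp add: algebra_simps)
    qed
    then have ii: "ind (cls k t0) (t + s) = ind (cls k t0) t"
      unfolding ind_def using cls_iff_pp[OF t0 t] cls_iff_pp[OF t0 ts] by simp
    show ?thesis
    proof (cases "t \<in> cls k t0")
      case True
      have "pp 0 ((a * (t + s) ^ 3 + b * (t + s)) - ((a * t ^ 3 + b * t) + w))"
        using R[OF True] by (simp add: algebra_simps)
      then have "\<psi> (a * (t + s) ^ 3 + b * (t + s)) = \<psi> ((a * t ^ 3 + b * t) + w)" by (rule psi_pp0)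
      then have "F a b (t + s) = \<psi> w * F a b t" unfolding F_def using psi_add by simp
      then show ?thesis unfolding g_def using ii by simp
    next
      case False
      then show ?thesis unfolding g_def using ii unfolding ind_def by simp
    qed
  qed
  have "AV N g = AV N (\<lambda>t. g (t + s))" using AV_trans[OF lg sO] by simp
  also have "\<dots> = AV N (\<lambda>t. \<psi> w * g t)" using pt by (rule AV_cong)
  also have "\<dots> = \<psi> w * AV N g" by (rule AV_cmult)
  finally have "(1 - \<psi> w) * AV N g = 0" by (simp add: algebra_simps)
  then have "AV N g = 0" using w by simp
  then show ?thesis unfolding CI_def using haar_eq[OF lg] g_def by simp
qed

end

lemma even_card_invol:
  assumes "finite A" "\<And>x. x \<in> A \<Longrightarrow> f x \<in> A" "\<And>x. x \<in> A \<Longrightarrow> f (f x) = x" "\<And>x. x \<in> A \<Longrightarrow> f x \<noteq> x"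
  shows "even (card A)"
  using assms
proof (induction "card A" arbitrary: A rule: less_induct)
  case less
  show ?case
  proof (cases "A = {}")
    case True then show ?thesis by simp
  next
    case False
    then obtain x where x: "x \<in> A" by blast
    define A' where "A' = A - {x, f x}"
    have fx: "f x \<in> A" "f x \<noteq> x" using less.prems x by auto
    have c: "card A' = card A - 2" unfolding A'_def using less.prems(1) x fx
      by (simp add: card_Diff_subset)
    have c2: "card A \<ge> 2"
    proof -
      have "{x, f x} \<subseteq> A" using x fx by simp
      then have "card {x, f x} \<le> card A" using card_mono[OF less.prems(1)] by blast
      then show ?thesis using fx by simp
    qed
    have "even (card A')"
    proof (rule less.hyps)
      show "card A' < card A" using c c2 by simp
      show "finite A'" unfolding A'_def using less.prems(1) by simp
      fix y assume y: "y \<in> A'"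
      then have yA: "y \<in> A" and yx: "y \<noteq> x" "y \<noteq> f x" unfolding A'_def by auto
      show "f y \<in> A'"
      proof -
        have "f y \<noteq> x" using less.prems(3)[OF yA] yx by metis
        moreover have "f y \<noteq> f x" using less.prems(3)[OF yA] less.prems(3)[OF x] yx by metis
        ultimately show ?thesis unfolding A'_def using less.prems(2)[OF yA] by simp
      qed
      show "f (f y) = y" using less.prems(3)[OF yA] .
      show "f y \<noteq> y" using less.prems(4)[OF yA] .
    qed
    then show ?thesis using c c2 by (simp add: even_diff_nat)
  qed
qed

context LF begin

lemma q_odd: "odd qq"
  using LF unfolding nonarch_local_field_char0_odd_def by blast

lemma v1_not_pp1: "\<not> pp 1 (1::'a)" unfolding pp_def using v1 by simp

lemma v2: "v (2::'a) = 0"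
proof (rule ccontr)
  assume ne: "v (2::'a) \<noteq> 0"
  have "pp 0 (of_nat 2 :: 'a)" by (rule pp_nat)
  moreover have "(2::'a) \<noteq> 0" using char0[of 2] by simp
  ultimately have "0 \<le> v (2::'a)" unfolding pp_def by simp
  then have p2: "pp 1 (2::'a)" using ne unfolding pp_def by simp
  have o1: "(1::'a) \<in> OI" using pp_1 intO_pp by simp
  define f where "f C = cls 1 (rep C + 1)" for C
  have rO: "rep C + 1 \<in> OI" if "C \<in> QQ 1" for C
    using pp_add[of 0 "rep C" 1] rep_O[OF that] pp_1 intO_pp by simp
  have "even (card (QQ 1))"
  proof (rule even_card_invol[where f = f])
    show "finite (QQ 1)" by (rule Q_fin)
    fix C assume C: "C \<in> QQ 1"
    show "f C \<in> QQ 1" unfolding f_def using cls_in_Q[OF rO[OF C]] .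
    have r: "pp 1 (rep (cls 1 (rep C + 1)) - (rep C + 1))" "rep (cls 1 (rep C + 1)) \<in> OI"
      using rep_cls[OF rO[OF C], of 1] by simp_all
    have r2: "rep (cls 1 (rep C + 1)) + 1 \<in> OI" using pp_add[of 0 _ 1] r(2) pp_1 intO_pp by simp
    have "pp 1 ((rep (cls 1 (rep C + 1)) - (rep C + 1)) + 2)" using pp_add[OF r(1) p2] .
    then have "pp (int 1) ((rep (cls 1 (rep C + 1)) + 1) - rep C)" by (simp add: algebra_simps)
    then have "cls 1 (rep (cls 1 (rep C + 1)) + 1) = cls 1 (rep C)"
      using cls_eq[OF r2 rep_O[OF C]] by simp
    then show "f (f C) = C" unfolding f_def using Q_rep[OF C] by simp
    show "f C \<noteq> C"
    proof
      assume "f C = C"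
      then have "cls 1 (rep C + 1) = cls 1 (rep C)" unfolding f_def using Q_rep[OF C] by simp
      then have "pp (int 1) ((rep C + 1) - rep C)" using cls_eq[OF rO[OF C] rep_O[OF C]] by simp
      then show False using v1_not_pp1 by simp
    qed
  qed
  then show False using q_odd q_def by simp
qed

lemma unit_v: "u \<in> UU \<Longrightarrow> u \<noteq> 0 \<and> v u = 0"
  unfolding UU_def pp_def using intO_pp unfolding pp_def by auto

lemma pp_div_unit: "pp L z \<Longrightarrow> w \<noteq> 0 \<Longrightarrow> v w = 0 \<Longrightarrow> pp L (z / w)"
  unfolding pp_def by (cases "z = 0") (auto simp: vdiv)

lemma sq_split:
  assumes u: "u \<in> UU" and u1: "u1 \<in> UU" and p: "pp L (u ^ 2 - u1 ^ 2)"
  shows "pp L (u - u1) \<or> pp L (u + u1)"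
proof -
  have uO: "pp 0 u" and u1O: "pp 0 u1" using u u1 unfolding UU_def using intO_pp by auto
  have fac: "u ^ 2 - u1 ^ 2 = (u - u1) * (u + u1)" by (simp add: algebra_simps power2_eq_square)
  show ?thesis
  proof (cases "u + u1 = 0")
    case True then show ?thesis by simp
  next
    case nz: False
    show ?thesis
    proof (cases "pp 1 (u + u1)")
      case False
      have "pp 0 (u + u1)" using pp_add[OF uO u1O] .
      then have v0: "v (u + u1) = 0" using False nz unfolding pp_def by simp
      have "u - u1 = (u ^ 2 - u1 ^ 2) / (u + u1)" using nz fac by simp
      moreover have "pp L ((u ^ 2 - u1 ^ 2) / (u + u1))"
        using pp_div_unit[OF p nz v0] .
      ultimately show ?thesis by simp
    next
      case True
      have nm: "\<not> pp 1 (u - u1)"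
      proof
        assume "pp 1 (u - u1)"
        then have "pp 1 ((u + u1) + (u - u1))" using pp_add True by blast
        moreover have "(u + u1) + (u - u1) = 2 * u" by simp
        moreover have t2: "(2::'a) \<noteq> 0" using char0[of 2] by simp
        moreover have "2 * u \<noteq> 0" "v (2 * u) = 0" using unit_v[OF u] v2 vmult[of 2 u] t2 by simp_all
        ultimately show False unfolding pp_def by simp
      qed
      have nz2: "u - u1 \<noteq> 0" using nm by auto
      have "pp 0 (u - u1)" using pp_diff[OF uO u1O] .
      then have v0: "v (u - u1) = 0" using nm nz2 unfolding pp_def by simp
      have "u + u1 = (u ^ 2 - u1 ^ 2) / (u - u1)" using nz2 fac by simp
      moreover have "pp L ((u ^ 2 - u1 ^ 2) / (u - u1))"
        using pp_div_unit[OF p nz2 v0] .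
      ultimately show ?thesis by simp
    qed
  qed
qed

lemma count_bad:
  assumes Lk: "L \<le> k"
  shows "card {C \<in> QQ k. C \<subseteq> UU \<and> pp (int L) (rep C ^ 2 - c)} \<le> 2 * qq ^ (k - L)"
proof -
  let ?S = "{C \<in> QQ k. C \<subseteq> UU \<and> pp (int L) (rep C ^ 2 - c)}"
  show ?thesis
  proof (cases "?S = {}")
    case True
    then have "card ?S = 0" by (metis card.empty)
    then show ?thesis by simp
  next
    case False
    then obtain C1 where C1: "C1 \<in> ?S" by blast
    define u1 where "u1 = rep C1"
    have u1U: "u1 \<in> UU" using C1 Q_rep u1_def by blast
    have u1O: "u1 \<in> OI" and mu1O: "- u1 \<in> OI" using u1U unfolding UU_def using intO_pp pp_neg by auto
    have sub: "?S \<subseteq> {C \<in> QQ k. C \<subseteq> cls L u1} \<union> {C \<in> QQ k. C \<subseteq> cls L (- u1)}"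
    proof
      fix C assume C: "C \<in> ?S"
      define u where "u = rep C"
      have CQ: "C \<in> QQ k" using C by simp
      have uU: "u \<in> UU" using C Q_rep u_def by blast
      have uO: "u \<in> OI" using rep_O[OF CQ] u_def by simp
      have a1: "pp (int L) (u ^ 2 - c)" using C u_def by simp
      have a2: "pp (int L) (u1 ^ 2 - c)" using C1 u1_def by simp
      have "pp (int L) ((u ^ 2 - c) - (u1 ^ 2 - c))" using pp_diff[OF a1 a2] .
      then have "pp (int L) (u ^ 2 - u1 ^ 2)" by simp
      then have d: "pp (int L) (u - u1) \<or> pp (int L) (u - (- u1))" using sq_split[OF uU u1U] by simp
      have Csub: "C \<subseteq> cls L u" using cls_mono[OF Lk uO] Q_rep[OF CQ] u_def by simp
      from d show "C \<in> {C \<in> QQ k. C \<subseteq> cls L u1} \<union> {C \<in> QQ k. C \<subseteq> cls L (- u1)}"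
      proof
        assume "pp (int L) (u - u1)"
        then have "cls L u = cls L u1" using cls_eq[OF uO u1O] by simp
        then show ?thesis using Csub CQ by simp
      next
        assume "pp (int L) (u - (- u1))"
        then have "cls L u = cls L (- u1)" using cls_eq[OF uO mu1O] by simp
        then show ?thesis using Csub CQ by simp
      qed
    qed
    have "card ?S \<le> card ({C \<in> QQ k. C \<subseteq> cls L u1} \<union> {C \<in> QQ k. C \<subseteq> cls L (- u1)})"
      by (rule card_mono[OF _ sub]) (simp add: Q_fin)
    also have "\<dots> \<le> card {C \<in> QQ k. C \<subseteq> cls L u1} + card {C \<in> QQ k. C \<subseteq> cls L (- u1)}"
      by (rule card_Un_le)
    also have "\<dots> = 2 * qq ^ (k - L)" using fiber_card'[OF u1O Lk] fiber_card'[OF mu1O Lk] by simp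
    finally show ?thesis .
  qed
qed

end

context LF begin

lemma three_nz: "(3::'a) \<noteq> 0" using char0[of 3] by simp

lemma v3_nonneg: "0 \<le> v (3::'a)"
  using pp_nat[of 3] three_nz unfolding pp_def by simp

lemma VLd:
  assumes a: "a \<noteq> 0" and t0: "t0 \<in> OI" and d: "3 * a * t0 ^ 2 + b \<noteq> 0"
    and c1: "int k \<le> - v (3 * a * t0 ^ 2 + b) - 1"
    and c2: "0 \<le> v 3 + v a + int k + (- v (3 * a * t0 ^ 2 + b) - 1)"
    and c3: "0 \<le> v 3 + v a + 2 * (- v (3 * a * t0 ^ 2 + b) - 1)"
    and c4: "0 \<le> v a + 3 * (- v (3 * a * t0 ^ 2 + b) - 1)"
  shows "CI (cls k t0) a b = 0"
proof -
  define dd where "dd = 3 * a * t0 ^ 2 + b"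
  define D1 where "D1 = - v dd - 1"
  obtain x where x: "x \<noteq> 0" "v x = -1" "\<psi> x \<noteq> 1" using psi_nontriv by blast
  define s where "s = x / dd"
  have dd0: "dd \<noteq> 0" using d dd_def by simp
  have s0: "s \<noteq> 0" using x dd0 s_def by simp
  have vs: "v s = D1" using vdiv[OF x(1) dd0] x(2) s_def D1_def by simp
  have ps: "pp D1 s" using pp_self[of s] vs by simp
  have psk: "pp (int k) s" using pp_mono[OF ps] c1 D1_def dd_def by simp
  have xs: "x = dd * s" using dd0 s_def by simp
  show ?thesis
  proof (rule VL[OF t0 psk x(3)])
    fix t assume t: "t \<in> cls k t0"
    then have tO: "t \<in> OI" and ptt: "pp (int k) (t - t0)" using cls_mem[OF t0] by auto
    have pt: "pp 0 t" and pt0: "pp 0 t0" using tO t0 intO_pp by auto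
    have ptp: "pp 0 (t + t0)" using pp_add[OF pt pt0] .
    have p3: "pp (v 3) (3::'a)" by (rule pp_self)
    have pa: "pp (v a) a" by (rule pp_self)
    have iden: "a * (t + s) ^ 3 + b * (t + s) - (a * t ^ 3 + b * t) - x
        = 3 * a * (t - t0) * (t + t0) * s + 3 * a * t * s ^ 2 + a * s ^ 3"
      unfolding xs dd_def by (simp add: algebra_simps power2_eq_square power3_eq_cube)
    have T1: "pp (v 3 + v a + int k + 0 + D1) (3 * a * (t - t0) * (t + t0) * s)"
      using pp_mult[OF pp_mult[OF pp_mult[OF pp_mult[OF p3 pa] ptt] ptp] ps] .
    have T1': "pp 0 (3 * a * (t - t0) * (t + t0) * s)"
      using pp_mono[OF T1] c2 D1_def dd_def by simp
    have s2: "pp (int 2 * D1) (s ^ 2)" using pp_pow[OF ps] .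
    have T2: "pp (v 3 + v a + 0 + int 2 * D1) (3 * a * t * s ^ 2)"
      using pp_mult[OF pp_mult[OF pp_mult[OF p3 pa] pt] s2] .
    have T2': "pp 0 (3 * a * t * s ^ 2)"
      using pp_mono[OF T2] c3 D1_def dd_def by simp
    have s3: "pp (int 3 * D1) (s ^ 3)" using pp_pow[OF ps] .
    have T3: "pp (v a + int 3 * D1) (a * s ^ 3)" using pp_mult[OF pa s3] .
    have T3': "pp 0 (a * s ^ 3)" using pp_mono[OF T3] c4 D1_def dd_def by simp
    show "pp 0 (a * (t + s) ^ 3 + b * (t + s) - (a * t ^ 3 + b * t) - x)"
      unfolding iden using pp_add[OF pp_add[OF T1' T2'] T3'] .
  qed
qed

lemma UI_zero:
  assumes "\<And>t0. t0 \<in> UU \<Longrightarrow> CI (cls 1 t0) a b = 0"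
  shows "UI a b = 0"
proof -
  have "UI a b = (\<Sum>C\<in>{C \<in> QQ 1. C \<subseteq> UU}. CI C a b)" using UI_split[of 1] by simp
  also have "\<dots> = 0"
  proof (rule sum.neutral, rule ballI)
    fix C assume C: "C \<in> {C \<in> QQ 1. C \<subseteq> UU}"
    then have CQ: "C \<in> QQ 1" and "rep C \<in> UU" using Q_rep by blast+
    then have "CI (cls 1 (rep C)) a b = 0" using assms by blast
    then show "CI C a b = 0" using Q_rep[OF CQ] by simp
  qed
  finally show ?thesis .
qed

lemma II_CI0: "II a b = CI (cls 0 0) a b"
proof -
  obtain N where N: "lc N (F a b)" using lc_F_ex by blast
  have l2: "lc N (\<lambda>t. ind (cls 0 0) t * F a b t)" using lc_mult[OF lc_ind_cls[OF z_O] N] by simp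
  have "II a b = AV N (F a b)" unfolding II_def using haar_eq[OF N] .
  also have "\<dots> = AV N (\<lambda>t. ind (cls 0 0) t * F a b t)"
    by (rule AV_cong) (simp add: ind_def cls_0[OF z_O])
  also have "\<dots> = CI (cls 0 0) a b" unfolding CI_def using haar_eq[OF l2] by simp
  finally show ?thesis .
qed

lemma unit_term:
  assumes a: "a \<noteq> 0" and t0: "t0 \<in> UU"
  shows "3 * a * t0 ^ 2 \<noteq> 0 \<and> v (3 * a * t0 ^ 2) = v 3 + v a"
proof -
  have u: "t0 \<noteq> 0" "v t0 = 0" using unit_v[OF t0] by auto
  have "v (t0 ^ 2) = 0" using vpow[OF u(1)] u(2) by simp
  moreover have "t0 ^ 2 \<noteq> 0" using u by simp
  ultimately show ?thesis using vmult three_nz a by simp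
qed

lemma unit_O: "t0 \<in> UU \<Longrightarrow> t0 \<in> OI" unfolding UU_def by simp

lemma v_a3: "a \<noteq> 0 \<Longrightarrow> a * upi ^ 3 \<noteq> 0 \<and> v (a * upi ^ 3) = v a + 3"
  using upi_pow[of 3] vmult by simp

lemma v_b1: "b \<noteq> 0 \<Longrightarrow> b * upi \<noteq> 0 \<and> v (b * upi) = v b + 1"
  using upi vmult by simp

lemma Case1:
  assumes a: "a \<noteq> 0" and b: "b \<noteq> 0" and lt: "v b < v a" and m1: "v b \<le> -1"
  shows "II a b = 0"
proof -
  have e: "0 \<le> v (3::'a)" by (rule v3_nonneg)
  have dd: "3 * a * 0 ^ 2 + b = b" by simp
  have "CI (cls 0 0) a b = 0"
    by (rule VLd[OF a z_O]) (use b lt m1 e dd in simp_all)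
  then show ?thesis using II_CI0 by simp
qed

lemma Zlem:
  "a \<noteq> 0 \<Longrightarrow> b \<noteq> 0 \<Longrightarrow> v b < v a + v 3 \<Longrightarrow> 3 * (- v b) \<ge> - v a + 3 \<Longrightarrow> - v b \<ge> 1 \<Longrightarrow> II a b = 0"
proof (induction "nat (- v b)" arbitrary: a b rule: less_induct)
  case less
  note a = less.prems(1) and b = less.prems(2)
  have e: "0 \<le> v (3::'a)" by (rule v3_nonneg)
  show ?case
  proof (cases "v b < v a")
    case True
    then show ?thesis using Case1[OF a b] less.prems by simp
  next
    case False
    have m2: "- v b \<ge> 2" using False less.prems by linarith
    have U0: "UI a b = 0"
    proof (rule UI_zero)
      fix t0 assume t0: "t0 \<in> UU"
      have ut: "3 * a * t0 ^ 2 \<noteq> 0" "v (3 * a * t0 ^ 2) = v 3 + v a" using unit_term[OF a t0] by auto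
      have vd: "b + 3 * a * t0 ^ 2 \<noteq> 0 \<and> v (b + 3 * a * t0 ^ 2) = v b"
        using v_strict[OF b ut(1)] ut(2) less.prems(3) by simp
      have vd': "3 * a * t0 ^ 2 + b \<noteq> 0" "v (3 * a * t0 ^ 2 + b) = v b" using vd by (simp_all add: add.commute)
      show "CI (cls 1 t0) a b = 0"
        by (rule VLd[OF a unit_O[OF t0] vd'(1)]) (use vd'(2) m2 less.prems(3,4) e in simp_all)
    qed
    have a': "a * upi ^ 3 \<noteq> 0" "v (a * upi ^ 3) = v a + 3" using v_a3[OF a] by auto
    have b': "b * upi \<noteq> 0" "v (b * upi) = v b + 1" using v_b1[OF b] by auto
    have "II (a * upi ^ 3) (b * upi) = 0"
    proof (rule less.hyps[OF _ a'(1) b'(1)])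
      show "nat (- v (b * upi)) < nat (- v b)" using b'(2) m2 by simp
      show "v (b * upi) < v (a * upi ^ 3) + v 3" using a'(2) b'(2) less.prems(3) by simp
      show "- v (a * upi ^ 3) + 3 \<le> 3 * - v (b * upi)" using a'(2) b'(2) less.prems(4) by simp
      show "1 \<le> - v (b * upi)" using b'(2) m2 by simp
    qed
    then show ?thesis using REC[of a b] U0 by simp
  qed
qed

end

context LF begin

lemma q_ge1: "1 \<le> real qq" using qq_pos by simp

lemma powr_ge1: "0 \<le> x \<Longrightarrow> 1 \<le> real qq powr x"
  using q_ge1 by (rule ge_one_powr_ge_zero)

lemma II_rec_U0: "UI a b = 0 \<Longrightarrow> norm (II a b) = norm (II (a * upi ^ 3) (b * upi)) / real qq"
  using REC[of a b] by (simp add: norm_divide)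

lemma powr_shift: "real qq powr (x + y) / real qq powr y = real qq powr x"
  using qq_pos by (simp add: powr_add)

lemma powr_shift1: "real qq powr (x + 1) / real qq = real qq powr x"
  using powr_shift[of x 1] qq_pos by simp

lemma Q3:
  "a \<noteq> 0 \<Longrightarrow> (b = 0 \<or> v a \<le> 3 * v b) \<Longrightarrow>
    norm (II a b) \<le> real qq powr (1 + real_of_int (v 3) + real_of_int (v a) / 3)"
proof (induction "nat (- v a)" arbitrary: a b rule: less_induct)
  case less
  note a = less.prems(1)
  have e: "0 \<le> v (3::'a)" by (rule v3_nonneg)
  show ?case
  proof (cases "- v a \<le> 3 + 3 * v 3")
    case True
    then have "0 \<le> 1 + real_of_int (v 3) + real_of_int (v a) / 3" by linarith
    then show ?thesis using powr_ge1 II_norm order_trans by blast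
  next
    case False
    have U0: "UI a b = 0"
    proof (rule UI_zero)
      fix t0 assume t0: "t0 \<in> UU"
      have ut: "3 * a * t0 ^ 2 \<noteq> 0" "v (3 * a * t0 ^ 2) = v 3 + v a" using unit_term[OF a t0] by auto
      have vd: "3 * a * t0 ^ 2 + b \<noteq> 0 \<and> v (3 * a * t0 ^ 2 + b) = v 3 + v a"
      proof (cases "b = 0")
        case True then show ?thesis using ut by simp
      next
        case b: False
        have "v (3 * a * t0 ^ 2) < v b" using ut(2) less.prems(2) b False e by linarith
        then show ?thesis using v_strict[OF ut(1) b] ut(2) by simp
      qed
      show "CI (cls 1 t0) a b = 0"
        by (rule VLd[OF a unit_O[OF t0]]) (use vd False e in simp_all)
    qed
    have a': "a * upi ^ 3 \<noteq> 0" "v (a * upi ^ 3) = v a + 3" using v_a3[OF a] by auto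
    have "norm (II (a * upi ^ 3) (b * upi)) \<le> real qq powr (1 + real_of_int (v 3) + real_of_int (v (a * upi ^ 3)) / 3)"
    proof (rule less.hyps[OF _ a'(1)])
      show "nat (- v (a * upi ^ 3)) < nat (- v a)" using a'(2) False e by simp
      show "b * upi = 0 \<or> v (a * upi ^ 3) \<le> 3 * v (b * upi)"
      proof (cases "b = 0")
        case True then show ?thesis by simp
      next
        case b: False
        then show ?thesis using v_b1[OF b] a'(2) less.prems(2) by simp
      qed
    qed
    also have "\<dots> = real qq powr ((1 + real_of_int (v 3) + real_of_int (v a) / 3) + 1)"
      using a'(2) by (intro arg_cong[where f = "\<lambda>x. real qq powr x"]) (simp add: field_simps)
    finally have "norm (II (a * upi ^ 3) (b * upi)) / real qq \<le> real qq powr ((1 + real_of_int (v 3) + real_of_int (v a) / 3) + 1) / real qq"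
      using qq_pos by (simp add: divide_right_mono)
    also have "\<dots> = real qq powr (1 + real_of_int (v 3) + real_of_int (v a) / 3)"
      by (rule powr_shift1)
    finally show ?thesis using II_rec_U0[OF U0] by simp
  qed
qed

end

context LF begin

lemma div2_facts: "m \<le> 2 * ((m + 1) div 2) \<and> 2 * ((m + 1) div 2) \<le> m + (1::int)"
proof -
  have "m + 1 = 2 * ((m + 1) div 2) + (m + 1) mod 2" by simp
  moreover have "0 \<le> (m + 1) mod 2" "(m + 1) mod 2 < 2" by simp_all
  ultimately show ?thesis by linarith
qed

lemma div3_facts: "n \<le> 3 * ((n + 2) div 3) \<and> 3 * ((n + 2) div 3) \<le> n + (2::int)"
proof -
  have "n + 2 = 3 * ((n + 2) div 3) + (n + 2) mod 3" by simp
  moreover have "0 \<le> (n + 2) mod 3" "(n + 2) mod 3 < 3" by simp_all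
  ultimately show ?thesis by linarith
qed

lemma Crit:
  assumes a: "a \<noteq> 0" and b: "b \<noteq> 0" and eq: "v b = v a + v 3" and lt: "3 * v b < v a"
    and big: "- v a - v b > 8 + 4 * v 3"
  shows "norm (UI a b) \<le> 2 * real qq powr (2 + real_of_int (v 3) + (real_of_int (v a) + real_of_int (v b)) / 4)"
proof -
  define m where "m = - v b"
  define n where "n = - v a"
  define e where "e = v (3::'a)"
  have e0: "0 \<le> e" using v3_nonneg e_def by simp
  have nme: "n = m + e" using eq m_def n_def e_def by simp
  have m5: "m \<ge> 5" using big nme e0 m_def n_def e_def by linarith
  define k where "k = max ((m + 1) div 2) ((n + 2) div 3)"
  have d2: "m \<le> 2 * ((m + 1) div 2)" "2 * ((m + 1) div 2) \<le> m + 1" using div2_facts by auto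
  have d3: "n \<le> 3 * ((n + 2) div 3)" "3 * ((n + 2) div 3) \<le> n + 2" using div3_facts by auto
  have k2: "m \<le> 2 * k" using d2 k_def by linarith
  have k3: "n \<le> 3 * k" using d3 k_def by linarith
  have km: "k \<le> m" using d2 d3 k_def lt m_def n_def m5 by linarith
  have k1: "1 \<le> k" using k2 m5 by linarith
  have k4: "4 * k \<le> 8 + 3 * e + 2 * m" using d2 d3 k_def nme e0 m5 by linarith
  define k' where "k' = nat k"
  define L where "L = m - k"
  define L' where "L' = nat L"
  have k'k: "int k' = k" using k1 k'_def by simp
  have L'L: "int L' = L" using km L_def L'_def by simp
  have Lk: "L' \<le> k'" using k2 km k'_def L'_def L_def by linarith
  define c where "c = - b / (3 * a)"
  define S where "S = {C \<in> QQ k'. C \<subseteq> UU}"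
  have finS: "finite S" unfolding S_def using Q_fin by simp
  have three_a: "3 * a \<noteq> 0" using a three_nz by simp
  have good: "CI C a b = 0" if C: "C \<in> S" and nb: "\<not> pp (int L') (rep C ^ 2 - c)" for C
  proof -
    have CQ: "C \<in> QQ k'" using C S_def by simp
    have t0U: "rep C \<in> UU" using C Q_rep[OF CQ] S_def by blast
    define t0 where "t0 = rep C"
    have Ceq: "C = cls k' t0" using Q_rep[OF CQ] t0_def by simp
    define w where "w = t0 ^ 2 - c"
    have w0: "w \<noteq> 0" and vw: "v w < L" using nb L'L unfolding pp_def w_def t0_def by auto
    have dd: "3 * a * t0 ^ 2 + b = (3 * a) * w"
      unfolding w_def c_def using three_a by (simp add: field_simps)
    have dd0: "3 * a * t0 ^ 2 + b \<noteq> 0" using dd three_a w0 by simp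
    have vdd: "v (3 * a * t0 ^ 2 + b) = e + v a + v w"
      using dd vmult[OF three_a w0] vmult[OF three_nz a] e_def by simp
    show ?thesis unfolding Ceq
      by (rule VLd[OF a unit_O[OF t0U[folded t0_def]] dd0])
         (use vdd vw k'k k2 k3 nme L_def m_def n_def e_def in simp_all)
  qed
  have "UI a b = (\<Sum>C\<in>S. CI C a b)" unfolding S_def using UI_split[of k'] k1 k'_def by simp
  then have "norm (UI a b) \<le> (\<Sum>C\<in>S. norm (CI C a b))" using norm_sum by simp
  also have "\<dots> \<le> (\<Sum>C\<in>S. if pp (int L') (rep C ^ 2 - c) then 1 / real qq ^ k' else 0)"
  proof (rule sum_mono)
    fix C assume C: "C \<in> S"
    show "norm (CI C a b) \<le> (if pp (int L') (rep C ^ 2 - c) then 1 / real qq ^ k' else 0)"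
      using good[OF C] CI_norm[of C k' a b] C S_def by auto
  qed
  also have "\<dots> = (\<Sum>C\<in>{C \<in> S. pp (int L') (rep C ^ 2 - c)}. 1 / real qq ^ k')"
    by (rule sum.inter_filter[symmetric, OF finS])
  also have "\<dots> = real (card {C \<in> S. pp (int L') (rep C ^ 2 - c)}) / real qq ^ k'" by simp
  also have "\<dots> \<le> real (2 * qq ^ (k' - L')) / real qq ^ k'"
  proof (rule divide_right_mono)
    have "{C \<in> S. pp (int L') (rep C ^ 2 - c)} = {C \<in> QQ k'. C \<subseteq> UU \<and> pp (int L') (rep C ^ 2 - c)}"
      unfolding S_def by auto
    then show "real (card {C \<in> S. pp (int L') (rep C ^ 2 - c)}) \<le> real (2 * qq ^ (k' - L'))"
      using of_nat_mono[OF count_bad[OF Lk, of c]] by simp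
  qed simp
  also have "\<dots> = 2 / real qq ^ L'"
  proof -
    have h: "real qq ^ k' = real qq ^ (k' - L') * real qq ^ L'" using Lk by (simp add: power_add[symmetric])
    show ?thesis unfolding h using qq_pos by simp
  qed
  also have "\<dots> = 2 * real qq powr (- real L')"
    using qq_pos by (simp add: powr_minus powr_realpow divide_inverse)
  also have "\<dots> \<le> 2 * real qq powr (2 + real_of_int (v 3) + (real_of_int (v a) + real_of_int (v b)) / 4)"
  proof -
    have "- real L' \<le> 2 + real_of_int (v 3) + (real_of_int (v a) + real_of_int (v b)) / 4"
    proof -
      have i: "- 4 * L \<le> 8 + 4 * v 3 + v a + v b" using k4 L_def nme m_def n_def e_def by linarith
      have "real_of_int (- 4 * L) \<le> real_of_int (8 + 4 * v 3 + v a + v b)" using i by (simp only: of_int_le_iff)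
      then have r: "- 4 * real_of_int L \<le> 8 + 4 * real_of_int (v 3) + real_of_int (v a) + real_of_int (v b)" by simp
      have "real L' = real_of_int L" using L'L by simp
      then show ?thesis using r by (simp add: field_simps)
    qed
    then show ?thesis using q_ge1 by (simp add: powr_mono)
  qed
  finally show ?thesis .
qed

end

context LF begin

lemma Q2:
  "a \<noteq> 0 \<Longrightarrow> b \<noteq> 0 \<Longrightarrow> 3 * v b < v a \<Longrightarrow>
    norm (II a b) \<le> 2 * real qq powr (2 + real_of_int (v 3) + (real_of_int (v a) + real_of_int (v b)) / 4)"
proof (induction "nat (- v a)" arbitrary: a b rule: less_induct)
  case less
  note a = less.prems(1) and b = less.prems(2) and lt = less.prems(3)
  have e: "0 \<le> v (3::'a)" by (rule v3_nonneg)
  let ?E = "2 + real_of_int (v 3) + (real_of_int (v a) + real_of_int (v b)) / 4"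
  show ?case
  proof (cases "- v a - v b \<le> 8 + 4 * v 3")
    case True
    then have "real_of_int (- v a - v b) \<le> real_of_int (8 + 4 * v 3)" by (simp only: of_int_le_iff)
    then have "- real_of_int (v a) - real_of_int (v b) \<le> 8 + 4 * real_of_int (v 3)" by simp
    then have "0 \<le> ?E" by (simp add: field_simps)
    then have "1 \<le> real qq powr ?E" by (rule powr_ge1)
    then show ?thesis using II_norm[of a b] by linarith
  next
    case big: False
    consider (B) "v a + v 3 < v b" | (C) "v b < v a + v 3" | (D) "v b = v a + v 3" by linarith
    then show ?thesis
    proof cases
      case B
      have U0: "UI a b = 0"
      proof (rule UI_zero)
        fix t0 assume t0: "t0 \<in> UU"
        have ut: "3 * a * t0 ^ 2 \<noteq> 0" "v (3 * a * t0 ^ 2) = v 3 + v a" using unit_term[OF a t0] by auto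
        have "v (3 * a * t0 ^ 2) < v b" using ut(2) B by linarith
        then have vd: "3 * a * t0 ^ 2 + b \<noteq> 0" "v (3 * a * t0 ^ 2 + b) = v 3 + v a"
          using v_strict[OF ut(1) b] ut(2) by simp_all
        show "CI (cls 1 t0) a b = 0"
          by (rule VLd[OF a unit_O[OF t0] vd(1)]) (use vd(2) B lt e in simp_all)
      qed
      have a': "a * upi ^ 3 \<noteq> 0" "v (a * upi ^ 3) = v a + 3" using v_a3[OF a] by auto
      have b': "b * upi \<noteq> 0" "v (b * upi) = v b + 1" using v_b1[OF b] by auto
      have "norm (II (a * upi ^ 3) (b * upi)) \<le> 2 * real qq powr (2 + real_of_int (v 3) + (real_of_int (v (a * upi ^ 3)) + real_of_int (v (b * upi))) / 4)"
      proof (rule less.hyps[OF _ a'(1) b'(1)])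
        show "nat (- v (a * upi ^ 3)) < nat (- v a)" using a'(2) B lt e by simp
        show "3 * v (b * upi) < v (a * upi ^ 3)" using a'(2) b'(2) lt by simp
      qed
      also have "\<dots> = 2 * real qq powr (?E + 1)"
        using a'(2) b'(2) by (intro arg_cong[where f = "\<lambda>x. 2 * real qq powr x"]) (simp add: field_simps)
      finally have "norm (II (a * upi ^ 3) (b * upi)) / real qq \<le> 2 * real qq powr (?E + 1) / real qq"
        using qq_pos by (simp add: divide_right_mono)
      also have "\<dots> = 2 * real qq powr ?E" using powr_shift1[of ?E] by simp
      finally show ?thesis using II_rec_U0[OF U0] by simp
    next
      case C
      have "II a b = 0"
        by (rule Zlem[OF a b C]) (use big lt C e in linarith)+
      then show ?thesis by simp
    next
      case D
      have a': "a * upi ^ 3 \<noteq> 0" "v (a * upi ^ 3) = v a + 3" using v_a3[OF a] by auto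
      have b': "b * upi \<noteq> 0" "v (b * upi) = v b + 1" using v_b1[OF b] by auto
      have "II (a * upi ^ 3) (b * upi) = 0"
        by (rule Zlem[OF a'(1) b'(1)]) (use a'(2) b'(2) D big lt e in linarith)+
      then have "II a b = UI a b" using REC[of a b] by simp
      then show ?thesis using Crit[OF a b D lt] big by simp
    qed
  qed
qed

end

theorem proposition7p5:
  fixes v :: "'a::field \<Rightarrow> int" and \<psi> :: "'a \<Rightarrow> complex" and a b :: 'a
  assumes "nonarch_local_field_char0_odd v"
    and "unramified_character v \<psi>"
    and "a \<noteq> 0" and "v a < 0"
  shows "(b \<noteq> 0 \<and> v b < v a \<longrightarrow> Airy v \<psi> a b = 0) \<and>
         (b \<noteq> 0 \<and> v a \<le> v b \<and> real_of_int (v b) < real_of_int (v a) / 3 \<longrightarrow>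
            norm (Airy v \<psi> a b) \<le> 2 * real (resq v) powr (2 + real_of_int (v 3)) *
              real (resq v) powr (- real_of_int (v a) / 12 + real_of_int (v b) / 4)) \<and>
         ((b = 0 \<or> real_of_int (v a) / 3 \<le> real_of_int (v b)) \<longrightarrow>
            norm (Airy v \<psi> a b) \<le> real (resq v) powr (1 + real_of_int (v 3)))"
proof -
  interpret LF v \<psi> using assms(1,2) by unfold_locales
  have AI: "Airy v \<psi> a b = complex_of_real (real qq powr (- real_of_int (v a) / 3)) * II a b"
    unfolding Airy_def II_def F_def by simp
  have nA: "norm (Airy v \<psi> a b) = real qq powr (- real_of_int (v a) / 3) * norm (II a b)"
    unfolding AI by (simp add: norm_mult)
  have P: "0 \<le> real qq powr (- real_of_int (v a) / 3)" by simp
  have s1: "b \<noteq> 0 \<and> v b < v a \<longrightarrow> Airy v \<psi> a b = 0"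
  proof
    assume h: "b \<noteq> 0 \<and> v b < v a"
    then have "II a b = 0" using Case1[OF assms(3)] assms(4) by simp
    then show "Airy v \<psi> a b = 0" unfolding AI by simp
  qed
  have s2: "b \<noteq> 0 \<and> v a \<le> v b \<and> real_of_int (v b) < real_of_int (v a) / 3 \<longrightarrow>
            norm (Airy v \<psi> a b) \<le> 2 * real (resq v) powr (2 + real_of_int (v 3)) *
              real (resq v) powr (- real_of_int (v a) / 12 + real_of_int (v b) / 4)"
  proof
    assume h: "b \<noteq> 0 \<and> v a \<le> v b \<and> real_of_int (v b) < real_of_int (v a) / 3"
    then have "real_of_int (3 * v b) < real_of_int (v a)" by simp
    then have lt: "3 * v b < v a" by (simp only: of_int_less_iff)
    have "norm (II a b) \<le> 2 * real qq powr (2 + real_of_int (v 3) + (real_of_int (v a) + real_of_int (v b)) / 4)"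
      using Q2[OF assms(3) _ lt] h by simp
    then have "norm (Airy v \<psi> a b) \<le> real qq powr (- real_of_int (v a) / 3) * (2 * real qq powr (2 + real_of_int (v 3) + (real_of_int (v a) + real_of_int (v b)) / 4))"
      unfolding nA using P by (rule mult_left_mono)
    also have "\<dots> = 2 * (real qq powr (- real_of_int (v a) / 3) * real qq powr (2 + real_of_int (v 3) + (real_of_int (v a) + real_of_int (v b)) / 4))"
      by simp
    also have "real qq powr (- real_of_int (v a) / 3) * real qq powr (2 + real_of_int (v 3) + (real_of_int (v a) + real_of_int (v b)) / 4)
        = real qq powr ((2 + real_of_int (v 3)) + (- real_of_int (v a) / 12 + real_of_int (v b) / 4))"
      unfolding powr_add[symmetric] by (intro arg_cong[where f = "\<lambda>x. real qq powr x"]) (simp add: field_simps)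
    also have "\<dots> = real qq powr (2 + real_of_int (v 3)) * real qq powr (- real_of_int (v a) / 12 + real_of_int (v b) / 4)"
      by (rule powr_add)
    finally show "norm (Airy v \<psi> a b) \<le> 2 * real (resq v) powr (2 + real_of_int (v 3)) *
              real (resq v) powr (- real_of_int (v a) / 12 + real_of_int (v b) / 4)" by simp
  qed
  have s3: "(b = 0 \<or> real_of_int (v a) / 3 \<le> real_of_int (v b)) \<longrightarrow>
            norm (Airy v \<psi> a b) \<le> real (resq v) powr (1 + real_of_int (v 3))"
  proof
    assume h: "b = 0 \<or> real_of_int (v a) / 3 \<le> real_of_int (v b)"
    have c: "b = 0 \<or> v a \<le> 3 * v b"
    proof (cases "b = 0")
      case False
      then have "real_of_int (v a) \<le> real_of_int (3 * v b)" using h by simp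
      then show ?thesis by (simp only: of_int_le_iff) simp
    qed simp
    have "norm (II a b) \<le> real qq powr (1 + real_of_int (v 3) + real_of_int (v a) / 3)"
      using Q3[OF assms(3) c] .
    then have "norm (Airy v \<psi> a b) \<le> real qq powr (- real_of_int (v a) / 3) * real qq powr (1 + real_of_int (v 3) + real_of_int (v a) / 3)"
      unfolding nA using P by (rule mult_left_mono)
    also have "\<dots> = real qq powr (1 + real_of_int (v 3))"
      unfolding powr_add[symmetric] by (intro arg_cong[where f = "\<lambda>x. real qq powr x"]) (simp add: field_simps)
    finally show "norm (Airy v \<psi> a b) \<le> real (resq v) powr (1 + real_of_int (v 3))" .
  qed
  show ?thesis using s1 s2 s3 by blast
qed

end
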